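(* Let $\mathcal{A}$ and $\mathcal{B}$ be finite-dimensional von Neumann algebras with traces $d$ and $\tau$ respectively, let $k>0$, and let $(\mathcal{A},\mathcal{B},d,\tau,\mathcal{F})$ be a von Neumann $k$-bi-algebra with $\mathcal{F}^*\mathcal{F}=kI$. Then for every non-zero $x\in\mathcal{A}$ and all $\epsilon,\eta\in[0,1]$ with $\epsilon+\eta\le1$, \[\mathcal{S}^2_\epsilon(x)\,\mathcal{S}^2_\eta(\mathcal{F}(x))\ge k(1-\epsilon-\eta)^2.\]
   Context: A finite von Neumann algebra $\mathcal{M}$ is taken with a trace $\tau_{\mathcal{M}}$ (faithful normal tracial positive linear functional). $\|x\|_p=\tau_{\mathcal{M}}(|x|^p)^{1/p}$ for $p<\infty$, $\|x\|_\infty$ is the operator norm, $\mathcal{R}(x)$ is the range projection. For $\epsilon\in[0,1]$, $p\in[1,\infty]$, the $(p,\epsilon)$ smooth support of $x\in\mathcal{M}$ is $\mathcal{S}^p_\epsilon(x)=\inf\{\tau_{\mathcal{M}}(H\mathcal{R}(x)): H\in\mathcal{M},\ 0\le H\le I,\ \|(I-H)x\|_p\le\epsilon\|x\|_p\}$ (computed with $d$ in $\mathcal{A}$, $\tau$ in $\mathcal{B}$). For a linear map $\mathcal{F}:\mathcal{A}\to\mathcal{B}$, $\|\mathcal{F}\|_{q\to p}=\sup\{\|\mathcal{F}(x)\|_p:\|x\|_q=1\}$ and $\mathcal{F}^*:\mathcal{B}\to\mathcal{A}$ is the adjoint, $\tau(\mathcal{F}(x)y^* )=d(x\,\mathcal{F}^*(y)^*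 )$. For $k>0$, a $k$-transform is a linear $\mathcal{F}:\mathcal{A}\to\mathcal{B}$ with $\|\mathcal{F}\|_{1\to\infty}\le1$ and $\|\mathcal{F}^*\mathcal{F}(x)\|_\infty\ge k\|x\|_\infty$ for all $x$; $(\mathcal{A},\mathcal{B},d,\tau,\mathcal{F})$ is then a von Neumann $k$-bi-algebra. *)

theory Defs
  imports "HOL-Analysis.Analysis"
begin

text \<open>Finite-dimensional von Neumann algebras are modelled concretely as unital
 *-subalgebras of the algebra of complex n x n matrices (n = CARD('n)), acting on the
 Hilbert space complex^'n with its Euclidean (L2) norm.\<close>

definition cadj :: "complex^'n^'m \<Rightarrow> complex^'m^'n" where
  "cadj M = (\<chi> i j. cnj (M $ j $ i))"

definition qform :: "complex^'n^'n \<Rightarrow> complex^'n \<Rightarrow> complex" where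
  "qform M v = (\<Sum>i\<in>UNIV. cnj (v $ i) * ((M *v v) $ i))"

definition psd :: "complex^'n^'n \<Rightarrow> bool" where
  "psd M \<longleftrightarrow> cadj M = M \<and> (\<forall>v. qform M v \<in> \<real> \<and> 0 \<le> Re (qform M v))"

definition absm :: "complex^'n^'n \<Rightarrow> complex^'n^'n" where
  "absm x = (THE h. psd h \<and> h ** h = cadj x ** x)"

definition opnorm :: "complex^'n^'n \<Rightarrow> real" where
  "opnorm M = onorm (\<lambda>v. M *v v)"

definition rproj :: "complex^'n^'n \<Rightarrow> complex^'n^'n" where
  "rproj x = (THE P. P ** P = P \<and> cadj P = P \<and> range (\<lambda>v. P *v v) = range (\<lambda>v. x *v v))"

definition is_vna :: "(complex^'n^'n) set \<Rightarrow> bool" where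
  "is_vna M \<longleftrightarrow> mat 1 \<in> M
     \<and> (\<forall>x\<in>M. \<forall>y\<in>M. x + y \<in> M \<and> x ** y \<in> M)
     \<and> (\<forall>c. \<forall>x\<in>M. mat c ** x \<in> M)
     \<and> (\<forall>x\<in>M. cadj x \<in> M)"

definition clinear_fun :: "(complex^'n^'n) set \<Rightarrow> (complex^'n^'n \<Rightarrow> complex) \<Rightarrow> bool" where
  "clinear_fun M f \<longleftrightarrow> (\<forall>x\<in>M. \<forall>y\<in>M. f (x + y) = f x + f y)
     \<and> (\<forall>c. \<forall>x\<in>M. f (mat c ** x) = c * f x)"

definition clinear_map :: "(complex^'n^'n) set \<Rightarrow> (complex^'n^'n \<Rightarrow> complex^'m^'m) \<Rightarrow> bool" where
  "clinear_map M f \<longleftrightarrow> (\<forall>x\<in>M. \<forall>y\<in>M. f (x + y) = f x + f y)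
     \<and> (\<forall>c. \<forall>x\<in>M. f (mat c ** x) = mat c ** f x)"

text \<open>faithful normal tracial positive linear functional (normality is automatic in finite dimension)\<close>
definition is_trace :: "(complex^'n^'n) set \<Rightarrow> (complex^'n^'n \<Rightarrow> complex) \<Rightarrow> bool" where
  "is_trace M t \<longleftrightarrow> clinear_fun M t
     \<and> (\<forall>x\<in>M. \<forall>y\<in>M. t (x ** y) = t (y ** x))
     \<and> (\<forall>x\<in>M. psd x \<longrightarrow> t x \<in> \<real> \<and> 0 \<le> Re (t x))
     \<and> (\<forall>x\<in>M. psd x \<longrightarrow> t x = 0 \<longrightarrow> x = 0)"

definition norm1 :: "(complex^'n^'n \<Rightarrow> complex) \<Rightarrow> complex^'n^'n \<Rightarrow> real" where
  "norm1 t x = Re (t (absm x))"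

definition norm2 :: "(complex^'n^'n \<Rightarrow> complex) \<Rightarrow> complex^'n^'n \<Rightarrow> real" where
  "norm2 t x = sqrt (Re (t (absm x ** absm x)))"

definition is_map_adjoint ::
  "(complex^'n^'n) set \<Rightarrow> (complex^'m^'m) set \<Rightarrow> (complex^'n^'n \<Rightarrow> complex) \<Rightarrow> (complex^'m^'m \<Rightarrow> complex)
   \<Rightarrow> (complex^'n^'n \<Rightarrow> complex^'m^'m) \<Rightarrow> (complex^'m^'m \<Rightarrow> complex^'n^'n) \<Rightarrow> bool" where
  "is_map_adjoint A B d t F Fs \<longleftrightarrow> (\<forall>y\<in>B. Fs y \<in> A) \<and> clinear_map B Fs
     \<and> (\<forall>x\<in>A. \<forall>y\<in>B. t (F x ** cadj y) = d (x ** cadj (Fs y)))"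

text \<open>k-transform (F linear A \<rightarrow> B, norm 1\<rightarrow>\<infinity> at most 1, and the lower bound on F^*F)\<close>
definition k_transform ::
  "(complex^'n^'n) set \<Rightarrow> (complex^'m^'m) set \<Rightarrow> (complex^'n^'n \<Rightarrow> complex) \<Rightarrow> (complex^'m^'m \<Rightarrow> complex)
   \<Rightarrow> real \<Rightarrow> (complex^'n^'n \<Rightarrow> complex^'m^'m) \<Rightarrow> (complex^'m^'m \<Rightarrow> complex^'n^'n) \<Rightarrow> bool" where
  "k_transform A B d t k F Fs \<longleftrightarrow> (\<forall>x\<in>A. F x \<in> B) \<and> clinear_map A F
     \<and> Sup {opnorm (F x) | x. x \<in> A \<and> norm1 d x = 1} \<le> 1
     \<and> (\<forall>x\<in>A. opnorm (Fs (F x)) \<ge> k * opnorm x)"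

definition smooth_supp2 :: "(complex^'n^'n) set \<Rightarrow> (complex^'n^'n \<Rightarrow> complex) \<Rightarrow> real \<Rightarrow> complex^'n^'n \<Rightarrow> real" where
  "smooth_supp2 M t eps x = Inf {Re (t (H ** rproj x)) | H. H \<in> M \<and> psd H \<and> psd (mat 1 - H)
        \<and> norm2 t ((mat 1 - H) ** x) \<le> eps * norm2 t x}"

end

theory Submission
  imports Defs
begin


type_synonym 'n cm = "complex^'n^'n"

lemma cadj_cadj[simp]: "cadj (cadj M) = M"
  by (simp add: cadj_def vec_eq_iff)

lemma cadj_nth[simp]: "cadj M $ i $ j = cnj (M $ j $ i)"
  by (simp add: cadj_def)

lemma cadj_mult: "cadj (A ** B) = cadj B ** (cadj A :: complex^_^_)"
  by (simp add: cadj_def matrix_matrix_mult_def vec_eq_iff mult.commute)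

lemma cadj_add: "cadj (A + B) = cadj A + cadj B"
  by (simp add: cadj_def vec_eq_iff)

lemma cadj_diff: "cadj (A - B) = cadj A - cadj B"
  by (simp add: cadj_def vec_eq_iff)

lemma cadj_mat[simp]: "cadj (mat c) = mat (cnj c)"
  by (simp add: cadj_def mat_def vec_eq_iff)

lemma cadj_zero[simp]: "cadj 0 = 0"
  by (simp add: cadj_def vec_eq_iff)

lemma mat_mult_left_nth: "(mat c ** A) $ i $ j = c * (A $ i $ j :: complex)"
  unfolding matrix_matrix_mult_def mat_def by (simp add: if_distrib if_distribR sum.delta cong: if_cong)

lemma mat_mult_mat[simp]: "mat a ** mat b = (mat (a*b) :: complex^'n^'n)"
  by (simp add: vec_eq_iff mat_mult_left_nth) (simp add: mat_def)

lemma mat_add_mat: "mat a + mat b = (mat (a+b) :: complex^'n^'n)"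
  by (simp add: mat_def vec_eq_iff)

lemma mat_diff_mat: "mat a - mat b = (mat (a-b) :: complex^'n^'n)"
  by (simp add: mat_def vec_eq_iff)

lemma mat_mult_right_nth: "(A ** mat c) $ i $ j = (A $ i $ j :: complex) * c"
  unfolding matrix_matrix_mult_def mat_def by (simp add: if_distrib if_distribR sum.delta' cong: if_cong)

lemma mat_comm: "A ** mat c = mat c ** (A :: complex^'n^'n)"
  by (simp add: vec_eq_iff mat_mult_left_nth mat_mult_right_nth mult.commute)

lemma mat_scal_assoc: "mat c ** (A ** B) = (mat c ** A) ** (B::complex^'n^'n)"
  by (simp add: matrix_mul_assoc)

lemma mat_scal_assoc2: "(A::complex^'n^'n) ** (mat c ** B) = mat c ** (A ** (B::complex^'n^'n))"
  by (simp only: matrix_mul_assoc mat_comm[of A])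

lemma matrix_add_rdistrib: "(B + C) ** A = B ** A + C ** (A::complex^'n^'n)"
  by (vector matrix_matrix_mult_def sum.distrib[symmetric] field_simps)

lemma matrix_diff_ldistrib: "A ** (B - C) = A ** B - A ** (C::complex^'n^'n)"
  by (vector matrix_matrix_mult_def sum_subtractf[symmetric] field_simps)

lemma matrix_diff_rdistrib: "(B - C) ** A = B ** A - C ** (A::complex^'n^'n)"
  by (vector matrix_matrix_mult_def sum_subtractf[symmetric] field_simps)

lemma mat_vec_nth: "(mat c *v v) $ i = c * (v $ i :: complex)"
  unfolding matrix_vector_mult_def mat_def by (simp add: if_distrib if_distribR sum.delta cong: if_cong)

lemma scaleR_vec_nth_c: "((c *\<^sub>R v) :: complex^'n) $ i = of_real c * v $ i"
  by (simp only: vector_scaleR_component) (simp add: scaleR_conv_of_real)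

lemma scaleR_mat_nth_c: "((c *\<^sub>R v) :: complex^'n^'m) $ i $ j = of_real c * v $ i $ j"
  by (simp only: vector_scaleR_component) (simp add: scaleR_conv_of_real)

lemma mat_real_vec: "(mat (complex_of_real c) *v v) = c *\<^sub>R (v :: complex^'n)"
  unfolding vec_eq_iff scaleR_vec_nth_c mat_vec_nth by simp

lemma mat_real_mult: "mat (complex_of_real c) ** A = c *\<^sub>R (A :: complex^'n^'n)"
  unfolding vec_eq_iff scaleR_mat_nth_c mat_mult_left_nth by simp

lemma scaleR_mat_vec: "(c *\<^sub>R A) *v v = c *\<^sub>R ((A::complex^'n^'n) *v v)"
  by (simp only: mat_real_mult[symmetric] matrix_vector_mul_assoc[symmetric] mat_real_vec)

lemma mat_mult_vec_scaleR: "(A :: complex^'n^'m) *v (c *\<^sub>R v) = c *\<^sub>R (A *v v)"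
  using matrix_vector_mul_linear[of A] by (simp add: linear_iff)

lemma mat_mult_scaleR_left: "(c *\<^sub>R A) ** B = c *\<^sub>R (A ** (B :: complex^'n^'n))"
  by (simp add: scalar_matrix_assoc)

lemma mat_mult_scaleR_right: "A ** (c *\<^sub>R B) = c *\<^sub>R (A ** (B :: complex^'n^'n))"
  by (simp add: matrix_scalar_ac scalar_matrix_assoc)

lemma cadj_scaleR: "cadj (c *\<^sub>R A) = c *\<^sub>R cadj (A :: complex^'n^'n)"
  unfolding vec_eq_iff scaleR_mat_nth_c cadj_nth by simp

lemma scaleR_vec_apply: "((c *\<^sub>R v) :: complex^'n) $ i = c *\<^sub>R v $ i"
  by simp

definition cinner :: "complex^'n \<Rightarrow> complex^'n \<Rightarrow> complex" where
  "cinner u v = (\<Sum>i\<in>UNIV. cnj (u $ i) * v $ i)"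

lemma qform_cinner: "qform M v = cinner v (M *v v)"
  by (simp add: qform_def cinner_def)

lemma Re_cinner: "Re (cinner u v) = inner u v"
  by (simp add: cinner_def inner_vec_def inner_complex_def)

lemma cinner_adj: "cinner u (M *v v) = cinner (cadj M *v u) v"
proof -
  have "cinner u (M *v v) = (\<Sum>i\<in>UNIV. \<Sum>j\<in>UNIV. cnj (u $ i) * (M $ i $ j * v $ j))"
    by (simp add: cinner_def matrix_vector_mult_def sum_distrib_left)
  also have "\<dots> = (\<Sum>j\<in>UNIV. \<Sum>i\<in>UNIV. cnj (u $ i) * (M $ i $ j * v $ j))"
    by (rule sum.swap)
  also have "\<dots> = cinner (cadj M *v u) v"
    by (simp add: cinner_def matrix_vector_mult_def sum_distrib_right sum_distrib_left mult_ac)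
  finally show ?thesis .
qed

lemma inner_adj: "inner u (M *v v) = inner (cadj M *v u) v"
  by (metis Re_cinner cinner_adj)

lemma cinner_cnj: "cnj (cinner u v) = cinner v u"
  by (simp add: cinner_def mult.commute)

lemma cinner_self: "cinner v v = complex_of_real ((norm v)^2)"
proof -
  have "cinner v v = (\<Sum>i\<in>UNIV. complex_of_real ((cmod (v $ i))^2))"
    unfolding cinner_def by (rule sum.cong) (auto simp: complex_norm_square[symmetric] mult.commute simp del: of_real_power)
  also have "\<dots> = complex_of_real ((norm v)^2)"
    by (simp add: norm_vec_def L2_set_def sum_nonneg)
  finally show ?thesis .
qed

lemma inner_self_norm: "inner (v::complex^'n) v = (norm v)^2"
  by (simp add: power2_norm_eq_inner)

lemma psd_iff_herm: "psd M \<longleftrightarrow> cadj M = M \<and> (\<forall>v. 0 \<le> inner v (M *v v))"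
proof -
  have real: "qform M v \<in> \<real>" if "cadj M = M" for v
  proof -
    have "cnj (qform M v) = qform M v"
      by (metis cinner_adj cinner_cnj qform_cinner that)
    then show ?thesis by (metis Reals_cnj_iff)
  qed
  show ?thesis unfolding psd_def using real by (auto simp: qform_cinner Re_cinner)
qed

lemma psd_adj_mult: "psd (cadj r ** r)"
  unfolding psd_iff_herm
proof
  show "cadj (cadj r ** r) = cadj r ** r" by (simp add: cadj_mult)
  show "\<forall>v. 0 \<le> inner v ((cadj r ** r) *v v)"
    by (metis cadj_cadj inner_adj inner_self_norm matrix_vector_mul_assoc zero_le_power2)
qed

lemma psd_sandwich: "psd P \<Longrightarrow> psd (cadj r ** P ** r)"
  unfolding psd_iff_herm
proof safe
  assume "cadj P = P" "\<forall>v. 0 \<le> inner v (P *v v)"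
  then show "cadj (cadj r ** P ** r) = cadj r ** P ** r"
    by (simp add: cadj_mult matrix_mul_assoc)
  fix v
  have "inner v ((cadj r ** P ** r) *v v) = inner (r *v v) (P *v (r *v v))"
    by (metis cadj_cadj inner_adj matrix_vector_mul_assoc)
  then show "0 \<le> inner v ((cadj r ** P ** r) *v v)" using \<open>\<forall>v. 0 \<le> inner v (P *v v)\<close> by simp
qed

lemma psd_add: "psd P \<Longrightarrow> psd Q \<Longrightarrow> psd (P + Q)"
  unfolding psd_iff_herm by (auto simp: cadj_add matrix_vector_mult_add_rdistrib inner_add_right)

lemma psd_scaleR: "psd P \<Longrightarrow> 0 \<le> c \<Longrightarrow> psd (c *\<^sub>R P)"
  unfolding psd_iff_herm by (auto simp: cadj_scaleR scaleR_mat_vec)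

lemma psd_zero: "psd 0"
  unfolding psd_iff_herm by simp

lemma psd_id: "psd (mat 1)"
  using psd_adj_mult[of "mat 1"] by simp


lemma quad_le0_imp: fixes c D :: real assumes "\<forall>t. 2*t*c + t^2 * D \<le> 0" shows "c = 0"
proof (rule ccontr)
  assume "c \<noteq> 0"
  define s where "s = \<bar>D\<bar> + 1"
  have pos: "s > 0" unfolding s_def by simp
  define t where "t = c / s"
  have "2*t*c + t^2 * D \<le> 0" using assms by blast
  hence "(2*t*c + t^2 * D) * s^2 \<le> 0" using pos
    by (simp add: mult_nonpos_nonneg)
  moreover have "(2*t*c + t^2 * D) * s^2 = c^2 * (2 * s + D)"
    unfolding t_def using pos by (simp add: field_simps power2_eq_square)
  moreover have "c^2 * (2 * s + D) > 0"
    using \<open>c \<noteq> 0\<close> unfolding s_def by (intro mult_pos_pos) (auto simp: abs_if)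
  ultimately show False by linarith
qed

lemma spectral_real:
  fixes T :: "'a::euclidean_space \<Rightarrow> 'a"
  assumes lin: "linear T" and sa: "\<And>u v. inner u (T v) = inner (T u) v"
  shows "subspace S \<Longrightarrow> (\<forall>x\<in>S. T x \<in> S) \<Longrightarrow>
    \<exists>E. finite E \<and> E \<subseteq> S \<and> span E = S \<and> (\<forall>e\<in>E. \<exists>l. T e = l *\<^sub>R e)"
proof (induction "dim S" arbitrary: S rule: less_induct)
  case less
  show ?case
  proof (cases "S = {0}")
    case True
    then show ?thesis by (intro exI[of _ "{}"]) auto
  next
    case False
    then obtain x where x: "x \<in> S" "x \<noteq> 0" using less.prems(1) subspace_0 by blast
    define K where "K = S \<inter> sphere 0 1"
    have "x /\<^sub>R norm x \<in> K" unfolding K_def using x less.prems(1)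
      by (auto simp: subspace_scale)
    hence Kne: "K \<noteq> {}" by blast
    have "compact K" unfolding K_def
      by (intro closed_Int_compact closed_subspace less.prems(1) compact_sphere)
    have blin: "bounded_linear T" using lin linear_conv_bounded_linear by blast
    have cont: "continuous_on K (\<lambda>v. inner v (T v))"
      by (intro continuous_intros linear_continuous_on blin)
    obtain v0 where v0K: "v0 \<in> K" and v0max: "\<forall>y\<in>K. inner y (T y) \<le> inner v0 (T v0)"
      using continuous_attains_sup[OF \<open>compact K\<close> Kne cont] by blast
    define lam where "lam = inner v0 (T v0)"
    have v0S: "v0 \<in> S" and nv0: "norm v0 = 1" using v0K by (auto simp: K_def)
    have iv0: "inner v0 v0 = 1" using nv0 by (simp add: power2_norm_eq_inner[symmetric])
    have key: "inner w (T v0) = 0" if wS: "w \<in> S" and wo: "inner w v0 = 0" for w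
    proof -
      define c where "c = inner w (T v0)"
      define D where "D = inner w (T w) - lam * inner w w"
      have "2*t*c + t^2 * D \<le> 0" for t
      proof -
        define v where "v = v0 + t *\<^sub>R w"
        have vS: "v \<in> S" unfolding v_def using wS v0S less.prems(1)
          by (simp add: subspace_add subspace_scale)
        have nv: "inner v v = 1 + t^2 * inner w w"
          unfolding v_def using iv0 wo
          by (simp add: inner_add_left inner_add_right inner_commute power2_eq_square)
        have nvpos: "inner v v > 0" unfolding nv by (simp add: add_pos_nonneg)
        hence "v \<noteq> 0" by auto
        have "v /\<^sub>R norm v \<in> K" unfolding K_def using vS \<open>v \<noteq> 0\<close> less.prems(1)
          by (auto simp: subspace_scale)
        hence "inner (v /\<^sub>R norm v) (T (v /\<^sub>R norm v)) \<le> lam" using v0max lam_def by blast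
        moreover have "inner (v /\<^sub>R norm v) (T (v /\<^sub>R norm v)) = inner v (T v) / (norm v)^2"
          using linear_scale[OF lin] by (simp add: power2_eq_square divide_inverse)
        moreover have "(norm v)^2 = inner v v" by (simp add: power2_norm_eq_inner)
        ultimately have "inner v (T v) \<le> lam * inner v v" using nvpos
          by (simp add: divide_le_eq)
        moreover have "inner v (T v) = lam + 2*t*c + t^2 * inner w (T w)"
        proof -
          have c1: "inner v0 (T w) = c" unfolding c_def using sa[of v0 w] inner_commute[of "T v0" w] by simp
          have "T v = T v0 + t *\<^sub>R T w" unfolding v_def
            using linear_add[OF lin] linear_scale[OF lin] by simp
          hence "inner v (T v) = inner v0 (T v0) + t * inner v0 (T w) + t * inner w (T v0) + t * t * inner w (T w)"
            unfolding v_def by (simp add: inner_add_left inner_add_right distrib_left)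
          then show ?thesis unfolding lam_def c_def[symmetric] c1 by (simp add: power2_eq_square)
        qed
        ultimately show ?thesis unfolding nv D_def by (simp add: algebra_simps power2_eq_square)
      qed
      then show ?thesis using quad_le0_imp c_def by blast
    qed
    have Tv0S: "T v0 \<in> S" using less.prems(2) v0S by blast
    have eig: "T v0 = lam *\<^sub>R v0"
    proof -
      define u where "u = T v0 - lam *\<^sub>R v0"
      have uS: "u \<in> S" unfolding u_def using Tv0S v0S less.prems(1) by (simp add: subspace_diff subspace_scale)
      have "inner u v0 = inner (T v0) v0 - lam * inner v0 v0" unfolding u_def
        by (simp add: inner_diff_left)
      hence uo: "inner u v0 = 0" unfolding lam_def using iv0 inner_commute[of "T v0" v0] by simp
      have "inner u (T v0) = 0" using key uS uo by blast
      hence "inner u u = 0" using uo unfolding u_def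
        by (simp add: inner_diff_right)
      then show ?thesis unfolding u_def by simp
    qed
    define S' where "S' = {w \<in> S. inner w v0 = 0}"
    have subS': "subspace S'" unfolding S'_def subspace_def using less.prems(1)
      by (auto simp: subspace_0 subspace_add subspace_scale inner_add_left)
    have invS': "\<forall>w\<in>S'. T w \<in> S'"
    proof
      fix w assume "w \<in> S'"
      hence "w \<in> S" "inner w v0 = 0" unfolding S'_def by auto
      moreover have "inner (T w) v0 = inner w (T v0)" using sa by simp
      ultimately show "T w \<in> S'" unfolding S'_def using less.prems(2) eig by simp
    qed
    have "S' \<subseteq> S" unfolding S'_def by auto
    moreover have "v0 \<notin> S'" unfolding S'_def using iv0 by auto
    ultimately have psub: "S' \<subset> S" using v0S by blast
    have e1: "span S' = S'" using subS' span_eq_iff by blast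
    have e2: "span S = S" using less.prems(1) span_eq_iff by blast
    have "span S' \<subset> span S" unfolding e1 e2 by (rule psub)
    hence "dim S' < dim S" by (rule dim_psubset)
    from less.hyps[OF this subS' invS'] obtain E' where
      E': "finite E'" "E' \<subseteq> S'" "span E' = S'" "\<forall>e\<in>E'. \<exists>l. T e = l *\<^sub>R e" by blast
    show ?thesis
    proof (intro exI[of _ "insert v0 E'"] conjI)
      show "finite (insert v0 E')" using E' by simp
      show "insert v0 E' \<subseteq> S" using E' v0S \<open>S' \<subseteq> S\<close> by auto
      show "\<forall>e\<in>insert v0 E'. \<exists>l. T e = l *\<^sub>R e" using E' eig by blast
      show "span (insert v0 E') = S"
      proof
        show "span (insert v0 E') \<subseteq> S"
          using E' v0S \<open>S' \<subseteq> S\<close> less.prems(1) by (intro span_minimal) auto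
        show "S \<subseteq> span (insert v0 E')"
        proof
          fix s assume sS: "s \<in> S"
          have "s - inner s v0 *\<^sub>R v0 \<in> S'" unfolding S'_def using sS v0S less.prems(1) iv0
            by (simp add: subspace_diff subspace_scale inner_diff_left)
          hence "s - inner s v0 *\<^sub>R v0 \<in> span (insert v0 E')"
            using E'(3) span_mono[of E' "insert v0 E'"] by auto
          moreover have "inner s v0 *\<^sub>R v0 \<in> span (insert v0 E')"
            by (simp add: span_base span_scale)
          ultimately have "(s - inner s v0 *\<^sub>R v0) + inner s v0 *\<^sub>R v0 \<in> span (insert v0 E')"
            by (rule span_add)
          then show "s \<in> span (insert v0 E')" by simp
        qed
      qed
    qed
  qed
qed


lemma herm_selfadj: "cadj M = M \<Longrightarrow> inner u (M *v v) = inner (M *v u) (v::complex^'n)"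
  by (metis inner_adj)

lemma eigbasis:
  fixes M :: "complex^'n^'n"
  assumes "cadj M = M"
  shows "\<exists>E lam. finite E \<and> span E = UNIV \<and> (\<forall>e\<in>E. M *v e = lam e *\<^sub>R e)"
proof -
  have "\<exists>E. finite E \<and> E \<subseteq> UNIV \<and> span E = UNIV \<and> (\<forall>e\<in>E. \<exists>l. M *v e = l *\<^sub>R e)"
    by (rule spectral_real[OF matrix_vector_mul_linear herm_selfadj[OF assms]]) auto
  then obtain E where E: "finite E" "span E = UNIV" "\<forall>e\<in>E. \<exists>l. M *v e = l *\<^sub>R e" by blast
  then obtain lam where "\<forall>e\<in>E. M *v e = lam e *\<^sub>R e" by metis
  with E show ?thesis by blast
qed

lemma mat_eq_on_span:
  fixes A B :: "complex^'n^'n"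
  assumes "span E = UNIV" "\<And>e. e \<in> E \<Longrightarrow> A *v e = B *v e"
  shows "A = B"
proof -
  have "(\<lambda>x. A *v x) x = (\<lambda>x. B *v x) x" for x
    by (rule linear_eq_on_span[where B=E]) (auto simp: assms)
  then show ?thesis by (simp add: matrix_eq)
qed

definition acts :: "complex^'n^'n \<Rightarrow> complex^'n^'n \<Rightarrow> (real \<Rightarrow> real) \<Rightarrow> bool" where
  "acts M X f \<longleftrightarrow> (\<forall>e \<mu>. M *v e = \<mu> *\<^sub>R e \<longrightarrow> X *v e = f \<mu> *\<^sub>R e)"

definition Ach :: "(complex^'n^'n) set \<Rightarrow> complex^'n^'n \<Rightarrow> (real \<Rightarrow> real) \<Rightarrow> bool" where
  "Ach A M f \<longleftrightarrow> (\<exists>X\<in>A. cadj X = X \<and> acts M X f)"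

lemma vna_UNIV: "is_vna UNIV"
  by (simp add: is_vna_def)

lemma vna_mat: "is_vna A \<Longrightarrow> mat c \<in> A"
  unfolding is_vna_def by (metis matrix_mul_rid)

lemma vna_add: "is_vna A \<Longrightarrow> x \<in> A \<Longrightarrow> y \<in> A \<Longrightarrow> x + y \<in> A"
  unfolding is_vna_def by blast

lemma vna_mult: "is_vna A \<Longrightarrow> x \<in> A \<Longrightarrow> y \<in> A \<Longrightarrow> x ** y \<in> A"
  unfolding is_vna_def by blast

lemma vna_smult: "is_vna A \<Longrightarrow> x \<in> A \<Longrightarrow> mat c ** x \<in> A"
  unfolding is_vna_def by blast

lemma vna_adj: "is_vna A \<Longrightarrow> x \<in> A \<Longrightarrow> cadj x \<in> A"
  unfolding is_vna_def by blast

lemma vna_scaleR: "is_vna A \<Longrightarrow> x \<in> A \<Longrightarrow> c *\<^sub>R x \<in> A"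
  by (metis mat_real_mult vna_smult)

lemma vna_uminus: "is_vna A \<Longrightarrow> x \<in> A \<Longrightarrow> - x \<in> A"
  using vna_scaleR[of A x "-1"] by simp

lemma vna_diff: "is_vna A \<Longrightarrow> x \<in> A \<Longrightarrow> y \<in> A \<Longrightarrow> x - y \<in> A"
  using vna_add[of A x "- y"] vna_uminus by auto

lemma vna_zero: "is_vna A \<Longrightarrow> 0 \<in> A"
  using vna_mat[of A 0] by simp

lemma acts_add: assumes "acts M X f" "acts M Y g" shows "acts M (X + Y) (\<lambda>\<mu>. f \<mu> + g \<mu>)"
  unfolding acts_def
proof (intro allI impI)
  fix e \<mu> assume "M *v e = \<mu> *\<^sub>R e"
  then have "X *v e = f \<mu> *\<^sub>R e" "Y *v e = g \<mu> *\<^sub>R e" using assms unfolding acts_def by blast+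
  then show "(X + Y) *v e = (f \<mu> + g \<mu>) *\<^sub>R e" by (simp add: matrix_vector_mult_add_rdistrib scaleR_add_left)
qed

lemma acts_diff: assumes "acts M X f" "acts M Y g" shows "acts M (X - Y) (\<lambda>\<mu>. f \<mu> - g \<mu>)"
  unfolding acts_def
proof (intro allI impI)
  fix e \<mu> assume "M *v e = \<mu> *\<^sub>R e"
  then have "X *v e = f \<mu> *\<^sub>R e" "Y *v e = g \<mu> *\<^sub>R e" using assms unfolding acts_def by blast+
  then show "(X - Y) *v e = (f \<mu> - g \<mu>) *\<^sub>R e" by (simp add: matrix_vector_mult_diff_rdistrib scaleR_diff_left)
qed

lemma acts_scale: assumes "acts M X f" shows "acts M (c *\<^sub>R X) (\<lambda>\<mu>. c * f \<mu>)"
  unfolding acts_def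
proof (intro allI impI)
  fix e \<mu> assume "M *v e = \<mu> *\<^sub>R e"
  then have "X *v e = f \<mu> *\<^sub>R e" using assms unfolding acts_def by blast+
  then show "(c *\<^sub>R X) *v e = (c * f \<mu>) *\<^sub>R e" by (simp add: scaleR_mat_vec)
qed

lemma acts_mult: assumes "acts M X f" "acts M Y g" shows "acts M (X ** Y) (\<lambda>\<mu>. f \<mu> * g \<mu>)"
  unfolding acts_def
proof (intro allI impI)
  fix e \<mu> assume "M *v e = \<mu> *\<^sub>R e"
  then have "X *v e = f \<mu> *\<^sub>R e" "Y *v e = g \<mu> *\<^sub>R e" using assms unfolding acts_def by blast+
  then show "(X ** Y) *v e = (f \<mu> * g \<mu>) *\<^sub>R e" by (simp add: matrix_vector_mul_assoc[symmetric] mat_mult_vec_scaleR)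
qed

lemma acts_const: "acts M (mat (complex_of_real c)) (\<lambda>\<mu>. c)"
  unfolding acts_def by (simp add: mat_real_vec)

lemma acts_self: "acts M M (\<lambda>\<mu>. \<mu>)"
  unfolding acts_def by simp

lemma acts_id: "acts M (mat 1) (\<lambda>\<mu>. 1)"
  unfolding acts_def by simp

lemma acts_cong: "acts M X f \<Longrightarrow> (\<And>\<mu>. f \<mu> = g \<mu>) \<Longrightarrow> acts M X g"
  unfolding acts_def by simp

context
  fixes A :: "(complex^'n^'n) set" and M :: "complex^'n^'n" and E lam
  assumes vA: "is_vna A" and MA: "M \<in> A" and hM: "cadj M = M"
    and Efin: "finite E" and Espan: "span E = UNIV" and Elam: "\<forall>e\<in>E. M *v e = lam e *\<^sub>R e"
begin

lemma acts_commute: assumes "acts M X f" "acts M Y g" shows "X ** Y = Y ** X"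
proof (rule mat_eq_on_span[OF Espan])
  fix e assume "e \<in> E"
  hence ev: "M *v e = lam e *\<^sub>R e" using Elam by blast
  have "X *v e = f (lam e) *\<^sub>R e" "Y *v e = g (lam e) *\<^sub>R e" using assms ev unfolding acts_def by blast+
  thus "(X ** Y) *v e = (Y ** X) *v e" by (simp add: matrix_vector_mul_assoc[symmetric] mat_mult_vec_scaleR)
qed

lemma Ach_const: "Ach A M (\<lambda>_. c)"
  unfolding Ach_def
proof (intro bexI conjI)
  show "acts M (mat (complex_of_real c)) (\<lambda>_. c)" by (rule acts_const)
  show "cadj (mat (complex_of_real c)) = mat (complex_of_real c)" by simp
  show "mat (complex_of_real c) \<in> A" by (rule vna_mat[OF vA])
qed

lemma Ach_id: "Ach A M (\<lambda>\<mu>. \<mu>)"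
  unfolding Ach_def using MA hM acts_self by blast

lemma Ach_add: assumes "Ach A M f" "Ach A M g" shows "Ach A M (\<lambda>\<mu>. f \<mu> + g \<mu>)"
proof -
  obtain X Y where X: "X \<in> A" "cadj X = X" "acts M X f" and Y: "Y \<in> A" "cadj Y = Y" "acts M Y g"
    using assms unfolding Ach_def by blast
  show ?thesis unfolding Ach_def
  proof (intro bexI[of _ "X + Y"] conjI)
    show "X + Y \<in> A" using X Y vna_add[OF vA] by blast
    show "cadj (X + Y) = X + Y" using X Y by (simp add: cadj_add)
    show "acts M (X + Y) (\<lambda>\<mu>. f \<mu> + g \<mu>)" using X Y by (simp add: acts_add)
  qed
qed

lemma Ach_scale: assumes "Ach A M f" shows "Ach A M (\<lambda>\<mu>. c * f \<mu>)"
proof -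
  obtain X where X: "X \<in> A" "cadj X = X" "acts M X f"
    using assms unfolding Ach_def by blast
  show ?thesis unfolding Ach_def
  proof (intro bexI[of _ "c *\<^sub>R X"] conjI)
    show "c *\<^sub>R X \<in> A" using X vna_scaleR[OF vA] by blast
    show "cadj (c *\<^sub>R X) = c *\<^sub>R X" using X by (simp add: cadj_scaleR)
    show "acts M (c *\<^sub>R X) (\<lambda>\<mu>. c * f \<mu>)" using X by (simp add: acts_scale)
  qed
qed

lemma Ach_mult: "Ach A M f \<Longrightarrow> Ach A M g \<Longrightarrow> Ach A M (\<lambda>\<mu>. f \<mu> * g \<mu>)"
proof -
  assume "Ach A M f" "Ach A M g"
  then obtain X Y where X: "X \<in> A" "cadj X = X" "acts M X f" and Y: "Y \<in> A" "cadj Y = Y" "acts M Y g"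
    unfolding Ach_def by blast
  have c: "X ** Y = Y ** X" using acts_commute X Y by blast
  show ?thesis unfolding Ach_def
  proof (intro bexI[of _ "X ** Y"] conjI)
    show "X ** Y \<in> A" using X Y vA vna_mult by blast
    show "cadj (X ** Y) = X ** Y" using X Y c by (simp add: cadj_mult)
    show "acts M (X ** Y) (\<lambda>\<mu>. f \<mu> * g \<mu>)" using X Y by (simp add: acts_mult)
  qed
qed

lemma Ach_prod: "finite S \<Longrightarrow> (\<And>\<nu>. \<nu> \<in> S \<Longrightarrow> Ach A M (f \<nu>)) \<Longrightarrow> Ach A M (\<lambda>\<mu>. \<Prod>\<nu>\<in>S. f \<nu> \<mu>)"
proof (induction S rule: finite_induct)
  case empty
  then show ?case using Ach_const[of 1] by simp
next
  case (insert x F)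
  then show ?case using Ach_mult[of "f x" "\<lambda>\<mu>. \<Prod>\<nu>\<in>F. f \<nu> \<mu>"] by simp
qed

lemma Ach_sum: "finite S \<Longrightarrow> (\<And>\<nu>. \<nu> \<in> S \<Longrightarrow> Ach A M (f \<nu>)) \<Longrightarrow> Ach A M (\<lambda>\<mu>. \<Sum>\<nu>\<in>S. f \<nu> \<mu>)"
proof (induction S rule: finite_induct)
  case empty
  then show ?case using Ach_const[of 0] by simp
next
  case (insert x F)
  then show ?case using Ach_add[of "f x" "\<lambda>\<mu>. \<Sum>\<nu>\<in>F. f \<nu> \<mu>"] by simp
qed

lemma Ach_lin: "Ach A M (\<lambda>\<mu>. \<mu> - \<nu>)"
  using Ach_add[OF Ach_id Ach_const[of "-\<nu>"]] by simp

definition "L = lam ` E"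

lemma L_fin: "finite L" unfolding L_def using Efin by simp

lemma Ach_annih: "Ach A M (\<lambda>\<mu>. \<Prod>\<nu>\<in>S. (\<mu> - \<nu>))" if "finite S"
  using Ach_prod[OF that, of "\<lambda>\<nu> \<mu>. \<mu> - \<nu>"] Ach_lin by simp

lemma spec_in_L: assumes "M *v e = \<mu> *\<^sub>R e" "e \<noteq> 0" shows "\<mu> \<in> L"
proof -
  obtain Z where Z: "Z \<in> A" "acts M Z (\<lambda>\<mu>. \<Prod>\<nu>\<in>L. (\<mu> - \<nu>))"
    using Ach_annih[OF L_fin] unfolding Ach_def by blast
  have "Z = 0"
  proof (rule mat_eq_on_span[OF Espan])
    fix b assume "b \<in> E"
    then have "Z *v b = (\<Prod>\<nu>\<in>L. (lam b - \<nu>)) *\<^sub>R b" using Z(2) Elam unfolding acts_def by blast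
    moreover have "(\<Prod>\<nu>\<in>L. (lam b - \<nu>)) = 0" using \<open>b \<in> E\<close> L_fin unfolding L_def
      by (simp add: prod_zero_iff)
    ultimately show "Z *v b = 0 *v b" by simp
  qed
  then have "(\<Prod>\<nu>\<in>L. (\<mu> - \<nu>)) *\<^sub>R e = 0" using Z(2) assms(1) unfolding acts_def by force
  then have "(\<Prod>\<nu>\<in>L. (\<mu> - \<nu>)) = 0" using assms(2) by simp
  then show ?thesis using L_fin by (simp add: prod_zero_iff)
qed

lemma Ach_any: "Ach A M f"
proof -
  define c where "c \<nu>0 = f \<nu>0 / (\<Prod>\<nu>\<in>L - {\<nu>0}. (\<nu>0 - \<nu>))" for \<nu>0
  define g where "g \<mu> = (\<Sum>\<nu>0\<in>L. c \<nu>0 * (\<Prod>\<nu>\<in>L - {\<nu>0}. (\<mu> - \<nu>)))" for \<mu>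
  have "Ach A M g" unfolding g_def
    by (intro Ach_sum L_fin Ach_scale Ach_annih) (simp add: L_fin)
  then obtain X where X: "X \<in> A" "cadj X = X" "acts M X g" unfolding Ach_def by blast
  have gf: "g \<mu> = f \<mu>" if "\<mu> \<in> L" for \<mu>
  proof -
    have "c \<nu>0 * (\<Prod>\<nu>\<in>L - {\<nu>0}. (\<mu> - \<nu>)) = (if \<nu>0 = \<mu> then f \<mu> else 0)" if "\<nu>0 \<in> L" for \<nu>0
    proof (cases "\<nu>0 = \<mu>")
      case True
      have "(\<Prod>\<nu>\<in>L - {\<mu>}. (\<mu> - \<nu>)) \<noteq> 0" using L_fin by (simp add: prod_zero_iff)
      then show ?thesis using True unfolding c_def by simp
    next
      case False
      then have "(\<Prod>\<nu>\<in>L - {\<nu>0}. (\<mu> - \<nu>)) = 0" using L_fin \<open>\<mu> \<in> L\<close>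
        by (simp add: prod_zero_iff)
      then show ?thesis using False by simp
    qed
    then have "g \<mu> = (\<Sum>\<nu>0\<in>L. (if \<nu>0 = \<mu> then f \<mu> else 0))" unfolding g_def
      by (intro sum.cong) auto
    also have "\<dots> = f \<mu>" using L_fin that by simp
    finally show ?thesis .
  qed
  show ?thesis unfolding Ach_def
  proof (intro bexI[of _ X] conjI X(2))
    show "acts M X f" unfolding acts_def
    proof (intro allI impI)
      fix e \<mu> assume ev: "M *v e = \<mu> *\<^sub>R e"
      show "X *v e = f \<mu> *\<^sub>R e"
      proof (cases "e = 0")
        case True then show ?thesis by simp
      next
        case False
        then have "\<mu> \<in> L" using spec_in_L ev by blast
        then have "g \<mu> = f \<mu>" using gf by blast
        moreover have "X *v e = g \<mu> *\<^sub>R e" using X(3) ev unfolding acts_def by blast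
        ultimately show ?thesis by simp
      qed
    qed
  qed (rule X(1))
qed

end

lemma Ach_exists:
  fixes A :: "(complex^'n^'n) set"
  assumes "is_vna A" "M \<in> A" "cadj M = M"
  shows "\<exists>X\<in>A. cadj X = X \<and> acts M X f"
proof -
  obtain E lam where "finite E" "span E = UNIV" "\<forall>e\<in>E. M *v e = lam e *\<^sub>R e"
    using eigbasis[OF assms(3)] by blast
  then show ?thesis using Ach_any[OF assms] unfolding Ach_def by blast
qed

lemma acts_eq:
  fixes M :: "complex^'n^'n"
  assumes "cadj M = M" "acts M X f" "acts M Y g"
    and fg: "\<And>\<mu> e. M *v e = \<mu> *\<^sub>R e \<Longrightarrow> e \<noteq> 0 \<Longrightarrow> f \<mu> = g \<mu>"
  shows "X = Y"
proof -
  obtain E lam where E: "finite E" "span E = UNIV" "\<forall>e\<in>E. M *v e = lam e *\<^sub>R e"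
    using eigbasis[OF assms(1)] by blast
  show ?thesis
  proof (rule mat_eq_on_span[OF E(2)])
    fix e assume "e \<in> E"
    then have ev: "M *v e = lam e *\<^sub>R e" using E by blast
    show "X *v e = Y *v e"
    proof (cases "e = 0")
      case True then show ?thesis by simp
    next
      case False then show ?thesis using assms(2,3) ev fg[OF ev] unfolding acts_def by simp
    qed
  qed
qed

lemma acts_commute_gen:
  fixes M :: "complex^'n^'n"
  assumes "cadj M = M" "acts M X f" "acts M Y g"
  shows "X ** Y = Y ** X"
proof -
  obtain E lam where E: "finite E" "span E = UNIV" "\<forall>e\<in>E. M *v e = lam e *\<^sub>R e"
    using eigbasis[OF assms(1)] by blast
  show ?thesis
  proof (rule mat_eq_on_span[OF E(2)])
    fix e assume "e \<in> E"
    hence ev: "M *v e = lam e *\<^sub>R e" using E(3) by blast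
    have "X *v e = f (lam e) *\<^sub>R e" "Y *v e = g (lam e) *\<^sub>R e" using assms ev unfolding acts_def by blast+
    thus "(X ** Y) *v e = (Y ** X) *v e" by (simp add: matrix_vector_mul_assoc[symmetric] mat_mult_vec_scaleR)
  qed
qed

lemma psd_eig_nonneg:
  assumes "psd M" "M *v e = \<mu> *\<^sub>R e" "e \<noteq> 0"
  shows "0 \<le> \<mu>"
proof -
  have "0 \<le> inner e (M *v e)" using assms(1) unfolding psd_iff_herm by blast
  also have "inner e (M *v e) = \<mu> * (norm e)^2" using assms(2) by (simp add: inner_self_norm)
  finally show ?thesis using assms(3) by (simp add: zero_le_mult_iff)
qed


lemma psd_herm: "psd M \<Longrightarrow> cadj M = M"
  unfolding psd_iff_herm by blast

lemma psd_inner: "psd M \<Longrightarrow> 0 \<le> inner v (M *v v)"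
  unfolding psd_iff_herm by blast

lemma psd_sqrt:
  fixes M :: "complex^'n^'n"
  assumes vA: "is_vna A" and MA: "M \<in> A" and pM: "psd M"
  shows "\<exists>s\<in>A. psd s \<and> s ** s = M \<and> acts M s sqrt"
proof -
  have hM: "cadj M = M" using pM psd_herm by blast
  obtain s where s: "s \<in> A" "cadj s = s" "acts M s sqrt" using Ach_exists[OF vA MA hM] by blast
  obtain r where r: "r \<in> A" "cadj r = r" "acts M r (\<lambda>\<mu>. sqrt (sqrt \<mu>))" using Ach_exists[OF vA MA hM] by blast
  have ss: "s ** s = M"
    by (rule acts_eq[OF hM acts_mult[OF s(3) s(3)] acts_self])
       (auto dest: psd_eig_nonneg[OF pM])
  have rr: "r ** r = s"
    by (rule acts_eq[OF hM acts_mult[OF r(3) r(3)] s(3)])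
       (auto dest: psd_eig_nonneg[OF pM])
  have "psd s" using psd_adj_mult[of r] r(2) rr by simp
  then show ?thesis using s ss by blast
qed

lemma psd_sqrt_unique:
  fixes M :: "complex^'n^'n"
  assumes ph: "psd h" and hh: "h ** h = M" and s: "acts M s sqrt"
  shows "h = s"
proof -
  have hh': "cadj h = h" using ph psd_herm by blast
  obtain E lam where E: "finite E" "span E = UNIV" "\<forall>e\<in>E. h *v e = lam e *\<^sub>R e"
    using eigbasis[OF hh'] by blast
  show ?thesis
  proof (rule mat_eq_on_span[OF E(2)])
    fix e assume "e \<in> E"
    then have ev: "h *v e = lam e *\<^sub>R e" using E by blast
    show "h *v e = s *v e"
    proof (cases "e = 0")
      case True then show ?thesis by simp
    next
      case False
      have l0: "0 \<le> lam e" using psd_eig_nonneg[OF ph ev False] .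
      have "M *v e = (lam e * lam e) *\<^sub>R e" using ev unfolding hh[symmetric]
        by (simp add: matrix_vector_mul_assoc[symmetric] mat_mult_vec_scaleR)
      then have "s *v e = sqrt (lam e * lam e) *\<^sub>R e" using s unfolding acts_def by blast
      then show ?thesis using ev l0 by simp
    qed
  qed
qed

lemma absm_props:
  fixes z :: "complex^'n^'n"
  assumes vA: "is_vna A" and zA: "z \<in> A"
  shows "absm z \<in> A \<and> psd (absm z) \<and> absm z ** absm z = cadj z ** z \<and> acts (cadj z ** z) (absm z) sqrt"
proof -
  let ?M = "cadj z ** z"
  have MA: "?M \<in> A" using vA zA vna_adj vna_mult by blast
  obtain s where s: "s \<in> A" "psd s" "s ** s = ?M" "acts ?M s sqrt"
    using psd_sqrt[OF vA MA psd_adj_mult] by blast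
  have "absm z = s" unfolding absm_def
  proof (rule the1_equality)
    show "\<exists>!h. psd h \<and> h ** h = ?M"
      using s psd_sqrt_unique by blast
    show "psd s \<and> s ** s = ?M" using s by blast
  qed
  then show ?thesis using s by simp
qed

lemma adj_zero_imp: fixes Y :: "complex^'n^'n" assumes "Y ** cadj Y = 0" shows "Y = 0"
proof -
  have "cadj Y *v v = 0" for v
  proof -
    have "inner (cadj Y *v v) (cadj Y *v v) = inner v (Y *v (cadj Y *v v))"
      by (metis cadj_cadj inner_adj)
    also have "\<dots> = 0" using assms by (simp add: matrix_vector_mul_assoc)
    finally show ?thesis by simp
  qed
  then have "cadj Y = 0" by (simp add: matrix_eq)
  then show ?thesis by (metis cadj_cadj cadj_zero)
qed

lemma rproj_props:
  fixes x :: "complex^'n^'n"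
  assumes vA: "is_vna A" and xA: "x \<in> A"
  shows "rproj x \<in> A \<and> rproj x ** rproj x = rproj x \<and> cadj (rproj x) = rproj x \<and> rproj x ** x = x"
proof -
  let ?M = "x ** cadj x"
  have MA: "?M \<in> A" using vA xA vna_adj vna_mult by blast
  have pM: "psd ?M" using psd_adj_mult[of "cadj x"] by simp
  have hM: "cadj ?M = ?M" using pM psd_herm by blast
  let ?ind = "\<lambda>\<mu>::real. if \<mu> = 0 then 0 else (1::real)"
  let ?inv = "\<lambda>\<mu>::real. if \<mu> = 0 then 0 else 1 / \<mu>"
  obtain P where P: "P \<in> A" "cadj P = P" "acts ?M P ?ind" using Ach_exists[OF vA MA hM] by blast
  obtain G where G: "G \<in> A" "cadj G = G" "acts ?M G ?inv" using Ach_exists[OF vA MA hM] by blast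
  have PP: "P ** P = P"
    by (rule acts_eq[OF hM acts_mult[OF P(3) P(3)] P(3)]) (auto split: if_splits)
  have PM: "P ** ?M = ?M"
    by (rule acts_eq[OF hM acts_mult[OF P(3) acts_self] acts_self]) (auto split: if_splits)
  have MG: "?M ** G = P"
    by (rule acts_eq[OF hM acts_mult[OF acts_self G(3)] P(3)]) (auto split: if_splits)
  define Y where "Y = (mat 1 - P) ** x"
  have "Y ** cadj Y = (mat 1 - P) ** ?M ** (mat 1 - P)"
    unfolding Y_def by (simp add: cadj_mult cadj_diff P(2) matrix_mul_assoc)
  also have "\<dots> = 0" by (simp add: matrix_diff_rdistrib PM)
  finally have "Y = 0" by (rule adj_zero_imp)
  then have Px: "P ** x = x" unfolding Y_def by (simp add: matrix_diff_rdistrib)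
  have rng: "range (\<lambda>v. P *v v) = range (\<lambda>v. x *v v)"
  proof
    show "range (\<lambda>v. P *v v) \<subseteq> range (\<lambda>v. x *v v)"
    proof
      fix w assume "w \<in> range (\<lambda>v. P *v v)"
      then obtain v where "w = P *v v" by blast
      then have "w = x *v ((cadj x ** G) *v v)" unfolding MG[symmetric]
        by (simp add: matrix_vector_mul_assoc matrix_mul_assoc)
      then show "w \<in> range (\<lambda>v. x *v v)" by blast
    qed
    show "range (\<lambda>v. x *v v) \<subseteq> range (\<lambda>v. P *v v)"
    proof
      fix w assume "w \<in> range (\<lambda>v. x *v v)"
      then obtain v where "w = x *v v" by blast
      then have "w = P *v (x *v v)" using Px by (simp add: matrix_vector_mul_assoc)
      then show "w \<in> range (\<lambda>v. P *v v)" by blast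
    qed
  qed
  have uniq: "Q = P" if Q: "Q ** Q = Q" "cadj Q = Q" "range (\<lambda>v. Q *v v) = range (\<lambda>v. x *v v)" for Q
  proof -
    have fix1: "R *v w = w" if R1: "R ** R = R" and R2: "w \<in> range (\<lambda>v. R *v v)" for R :: "complex^'n^'n" and w
    proof -
      obtain v where "w = R *v v" using R2 by blast
      then show ?thesis using R1 by (simp add: matrix_vector_mul_assoc)
    qed
    have QP: "Q ** P = P"
    proof (subst matrix_eq, intro allI)
      fix v
      have "P *v v \<in> range (\<lambda>v. Q *v v)" unfolding Q(3) rng[symmetric] by (rule rangeI)
      then have "Q *v (P *v v) = P *v v" by (rule fix1[OF Q(1)])
      then show "(Q ** P) *v v = P *v v" by (simp add: matrix_vector_mul_assoc)
    qed
    have PQ: "P ** Q = Q"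
    proof (subst matrix_eq, intro allI)
      fix v
      have "Q *v v \<in> range (\<lambda>v. P *v v)" unfolding rng Q(3)[symmetric] by (rule rangeI)
      then have "P *v (Q *v v) = Q *v v" by (rule fix1[OF PP])
      then show "(P ** Q) *v v = Q *v v" by (simp add: matrix_vector_mul_assoc)
    qed
    have "P = cadj (Q ** P)" using QP P(2) by simp
    also have "\<dots> = P ** Q" using P(2) Q(2) by (simp add: cadj_mult)
    finally show ?thesis using PQ by simp
  qed
  have "rproj x = P" unfolding rproj_def
  proof (rule the1_equality)
    show "\<exists>!Q. Q ** Q = Q \<and> cadj Q = Q \<and> range (\<lambda>v. Q *v v) = range (\<lambda>v. x *v v)"
      using uniq PP P(2) rng by blast
    show "P ** P = P \<and> cadj P = P \<and> range (\<lambda>v. P *v v) = range (\<lambda>v. x *v v)"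
      using PP P(2) rng by blast
  qed
  then show ?thesis using P PP Px by simp
qed

lemma psd_X_minus_sq:
  fixes X :: "complex^'n^'n"
  assumes pX: "psd X" and pIX: "psd (mat 1 - X)"
  shows "psd (X - X ** X)"
proof -
  have hX: "cadj X = X" using pX psd_herm by blast
  obtain s where s: "psd s" "s ** s = X" "acts X s sqrt"
    using psd_sqrt[OF vna_UNIV _ pX] by blast
  have hs: "cadj s = s" using s psd_herm by blast
  have "cadj s ** (mat 1 - X) ** s = X - X ** X"
    unfolding hs
    by (rule acts_eq[OF hX acts_mult[OF acts_mult[OF s(3) acts_diff[OF acts_id acts_self]] s(3)]
          acts_diff[OF acts_self acts_mult[OF acts_self acts_self]]])
       (auto dest: psd_eig_nonneg[OF pX] simp: algebra_simps)
  then show ?thesis using psd_sandwich[OF pIX, of s] by simp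
qed

lemma psd_norm_contr:
  assumes "psd (mat 1 - cadj a ** a)"
  shows "norm (a *v u) \<le> norm (u::complex^'n)"
proof -
  have "0 \<le> inner u ((mat 1 - cadj a ** a) *v u)" using assms psd_inner by blast
  also have "\<dots> = (norm u)^2 - (norm (a *v u))^2"
    by (simp add: matrix_vector_mult_diff_rdistrib inner_diff_right inner_self_norm
         matrix_vector_mul_assoc[symmetric] inner_adj[of u "cadj a", simplified])
  finally show ?thesis by (simp add: power_mono_iff[symmetric] abs_le_square_iff)
qed

lemma contr_psd_adj:
  assumes "\<And>u. norm (a *v u) \<le> norm (u::complex^'n)"
  shows "psd (mat 1 - a ** cadj a)"
  unfolding psd_iff_herm
proof (intro conjI allI)
  show "cadj (mat 1 - a ** cadj a) = mat 1 - a ** cadj a" by (simp add: cadj_diff cadj_mult)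
  fix v
  have e: "inner v ((a ** cadj a) *v v) = (norm (cadj a *v v))^2"
    by (metis cadj_cadj inner_adj inner_self_norm matrix_vector_mul_assoc)
  have "(norm (cadj a *v v))^2 = inner v (a *v (cadj a *v v))"
    using e by (simp add: matrix_vector_mul_assoc)
  also have "\<dots> \<le> norm v * norm (a *v (cadj a *v v))" by (rule norm_cauchy_schwarz)
  also have "\<dots> \<le> norm v * norm (cadj a *v v)" using assms by (simp add: mult_left_mono)
  finally have "norm (cadj a *v v) * norm (cadj a *v v) \<le> norm v * norm (cadj a *v v)"
    by (simp add: power2_eq_square)
  then have "norm (cadj a *v v) \<le> norm v"
    using norm_ge_zero[of "cadj a *v v"] by (auto simp: mult_le_cancel_right)
  then have "(norm (cadj a *v v))^2 \<le> (norm v)^2" by (simp add: power_mono)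
  then show "0 \<le> inner v ((mat 1 - a ** cadj a) *v v)"
    using e by (simp add: matrix_vector_mult_diff_rdistrib inner_diff_right inner_self_norm)
qed


lemma cadj_smult: "cadj (mat c ** y) = mat (cnj c) ** cadj (y::complex^'n^'n)"
  by (simp add: cadj_mult mat_comm)

lemma psd_diff_eq: "psd (mat 1 - X) \<Longrightarrow> psd (X - X ** X) \<Longrightarrow> psd (mat 1 - X ** (X::complex^'n^'n))"
  using psd_add[of "mat 1 - X" "X - X ** X"] by simp

definition n2sq :: "(complex^'n^'n \<Rightarrow> complex) \<Rightarrow> complex^'n^'n \<Rightarrow> real" where
  "n2sq t z = Re (t (cadj z ** z))"

context
  fixes A :: "(complex^'n^'n) set" and t
  assumes vA: "is_vna A" and tA: "is_trace A t"
begin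

lemma tr_add: "x \<in> A \<Longrightarrow> y \<in> A \<Longrightarrow> t (x + y) = t x + t y"
  using tA unfolding is_trace_def clinear_fun_def by blast

lemma tr_smult: "x \<in> A \<Longrightarrow> t (mat c ** x) = c * t x"
  using tA unfolding is_trace_def clinear_fun_def by blast

lemma tr_scaleR: "x \<in> A \<Longrightarrow> t (r *\<^sub>R x) = of_real r * t x"
  using tr_smult[of x "of_real r"] by (simp add: mat_real_mult)

lemma tr_zero: "t 0 = 0"
  using tr_smult[OF vna_zero[OF vA], of 0] by simp

lemma tr_uminus: "x \<in> A \<Longrightarrow> t (- x) = - t x"
  using tr_scaleR[of x "-1"] by simp

lemma tr_diff: "x \<in> A \<Longrightarrow> y \<in> A \<Longrightarrow> t (x - y) = t x - t y"
  using tr_add[of x "- y"] tr_uminus[of y] vna_uminus[OF vA, of y] by simp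

lemma tr_cyc: "x \<in> A \<Longrightarrow> y \<in> A \<Longrightarrow> t (x ** y) = t (y ** x)"
  using tA unfolding is_trace_def by blast

lemma tr_pos: "x \<in> A \<Longrightarrow> psd x \<Longrightarrow> t x \<in> \<real> \<and> 0 \<le> Re (t x)"
  using tA unfolding is_trace_def by blast

lemma tr_faithful: "x \<in> A \<Longrightarrow> psd x \<Longrightarrow> t x = 0 \<Longrightarrow> x = 0"
  using tA unfolding is_trace_def by blast

lemma tr_mono: "x \<in> A \<Longrightarrow> y \<in> A \<Longrightarrow> psd (y - x) \<Longrightarrow> Re (t x) \<le> Re (t y)"
  using tr_pos[of "y - x"] tr_diff[of y x] vna_diff[OF vA, of y x] by simp

lemma herm_shift_psd:
  fixes x :: "complex^'n^'n"
  assumes "cadj x = x"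
  shows "psd (x + mat (complex_of_real (opnorm x)))"
  unfolding psd_iff_herm
proof (intro conjI allI)
  show "cadj (x + mat (complex_of_real (opnorm x))) = x + mat (complex_of_real (opnorm x))"
    using assms by (simp add: cadj_add)
  fix v
  have "\<bar>inner v (x *v v)\<bar> \<le> norm v * norm (x *v v)" by (rule Cauchy_Schwarz_ineq2)
  also have "norm (x *v v) \<le> opnorm x * norm v"
    unfolding opnorm_def by (rule onorm) simp
  hence "norm v * norm (x *v v) \<le> norm v * (opnorm x * norm v)" by (simp add: mult_left_mono)
  finally have "- (opnorm x * (norm v)^2) \<le> inner v (x *v v)" by (simp add: power2_eq_square mult_ac)
  then show "0 \<le> inner v ((x + mat (complex_of_real (opnorm x))) *v v)"
    by (simp add: matrix_vector_mult_add_rdistrib inner_add_right mat_real_vec inner_self_norm)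
qed

lemma tr_herm_real: assumes xA: "x \<in> A" and hx: "cadj x = x" shows "t x \<in> \<real>"
proof -
  let ?c = "mat (complex_of_real (opnorm x))"
  have cA: "?c \<in> A" using vna_mat[OF vA] .
  have "t (x + ?c) \<in> \<real>" using tr_pos[OF vna_add[OF vA xA cA] herm_shift_psd[OF hx]] by blast
  moreover have "t ?c \<in> \<real>"
  proof -
    have "t ?c = t (mat (complex_of_real (opnorm x)) ** mat 1)" by simp
    also have "\<dots> = complex_of_real (opnorm x) * t (mat 1)" by (rule tr_smult[OF vna_mat[OF vA]])
    finally show ?thesis using tr_pos[OF vna_mat[OF vA] psd_id] by simp
  qed
  ultimately show ?thesis using tr_add[OF xA cA] by (metis Reals_diff add_diff_cancel_right')
qed


lemma tr_adj: assumes xA: "x \<in> A" shows "t (cadj x) = cnj (t x)"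
proof -
  have xsA: "cadj x \<in> A" using vna_adj[OF vA xA] .
  have s: "t x + t (cadj x) \<in> \<real>"
    using tr_herm_real[OF vna_add[OF vA xA xsA]] tr_add[OF xA xsA] by (simp add: cadj_add add.commute)
  have dA: "x - cadj x \<in> A" using vna_diff[OF vA xA xsA] .
  have "cadj (mat \<i> ** (x - cadj x)) = mat \<i> ** (x - cadj x)"
    by (simp add: cadj_smult cadj_diff matrix_diff_ldistrib mat_mult_left_nth vec_eq_iff algebra_simps)
  then have "t (mat \<i> ** (x - cadj x)) \<in> \<real>" using tr_herm_real[OF vna_smult[OF vA dA]] by blast
  then have d: "\<i> * (t x - t (cadj x)) \<in> \<real>" using tr_smult[OF dA] tr_diff[OF xA xsA] by simp
  have "Im (t x + t (cadj x)) = 0" using s complex_is_Real_iff by blast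
  moreover have "Im (\<i> * (t x - t (cadj x))) = 0" using d complex_is_Real_iff by blast
  ultimately show ?thesis by (simp add: complex_eq_iff)
qed

lemma n2sq_nonneg: "z \<in> A \<Longrightarrow> 0 \<le> n2sq t z"
  unfolding n2sq_def using tr_pos[OF vna_mult[OF vA vna_adj[OF vA] ] psd_adj_mult] by blast

lemma n2sq_zero: "z \<in> A \<Longrightarrow> n2sq t z = 0 \<Longrightarrow> z = 0"
proof -
  assume zA: "z \<in> A" and n: "n2sq t z = 0"
  have MA: "cadj z ** z \<in> A" using vna_mult[OF vA vna_adj[OF vA zA] zA] .
  have "t (cadj z ** z) \<in> \<real>" using tr_pos[OF MA psd_adj_mult] by blast
  then have "t (cadj z ** z) = 0" using n unfolding n2sq_def by (simp add: complex_is_Real_iff complex_eq_iff)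
  then have "cadj z ** z = 0" using tr_faithful[OF MA psd_adj_mult] by blast
  then have "cadj z = 0" using adj_zero_imp[of "cadj z"] by simp
  then show "z = 0" by (metis cadj_cadj cadj_zero)
qed

lemma norm2_eq: "z \<in> A \<Longrightarrow> norm2 t z = sqrt (n2sq t z)"
  unfolding norm2_def n2sq_def using absm_props[OF vA] by simp

lemma cross_sym: assumes zA: "z \<in> A" and wA: "w \<in> A"
  shows "Re (t (cadj z ** w)) = Re (t (cadj w ** z))"
proof -
  have "cadj (cadj w ** z) = cadj z ** w" by (simp add: cadj_mult)
  then have "t (cadj z ** w) = cnj (t (cadj w ** z))"
    using tr_adj[OF vna_mult[OF vA vna_adj[OF vA wA] zA]] by simp
  then show ?thesis by simp
qed

lemma n2sq_comb: assumes zA: "z \<in> A" and wA: "w \<in> A"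
  shows "n2sq t (z + s *\<^sub>R w) = n2sq t z + 2 * s * Re (t (cadj w ** z)) + s^2 * n2sq t w"
proof -
  have zs: "cadj z \<in> A" "cadj w \<in> A" using vna_adj[OF vA] zA wA by auto
  have e: "cadj (z + s *\<^sub>R w) ** (z + s *\<^sub>R w) = cadj z ** z + s *\<^sub>R (cadj z ** w) + s *\<^sub>R (cadj w ** z) + (s * s) *\<^sub>R (cadj w ** w)"
    by (simp add: cadj_add cadj_scaleR matrix_add_ldistrib matrix_add_rdistrib mat_mult_scaleR_left mat_mult_scaleR_right scaleR_add_right)
  have A1: "cadj z ** z \<in> A" "cadj z ** w \<in> A" "cadj w ** z \<in> A" "cadj w ** w \<in> A"
    using vna_mult[OF vA] zs zA wA by auto
  have "t (cadj (z + s *\<^sub>R w) ** (z + s *\<^sub>R w)) = t (cadj z ** z) + of_real s * t (cadj z ** w) + of_real s * t (cadj w ** z) + of_real (s * s) * t (cadj w ** w)"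
    unfolding e using A1
    by (simp add: tr_add tr_scaleR vna_add[OF vA] vna_scaleR[OF vA])
  then show ?thesis unfolding n2sq_def using cross_sym[OF zA wA]
    by (simp add: power2_eq_square algebra_simps)
qed

lemma cs: assumes zA: "z \<in> A" and wA: "w \<in> A"
  shows "Re (t (cadj w ** z)) \<le> sqrt (n2sq t w) * sqrt (n2sq t z)"
proof -
  define a where "a = n2sq t w"
  define b where "b = n2sq t z"
  define R where "R = Re (t (cadj w ** z))"
  have a0: "0 \<le> a" "0 \<le> b" unfolding a_def b_def using n2sq_nonneg zA wA by auto
  have q: "0 \<le> b + 2 * s * R + s^2 * a" for s
    using n2sq_comb[OF zA wA, of s] n2sq_nonneg[OF vna_add[OF vA zA vna_scaleR[OF vA wA, of s]]]
    unfolding a_def b_def R_def by simp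
  have "R^2 \<le> a * b"
  proof (cases "a = 0")
    case True
    have "R = 0"
    proof (rule ccontr)
      assume "R \<noteq> 0"
      have "0 \<le> b + 2 * (- (b + 1) / (2 * R)) * R" using q[of "- (b + 1) / (2 * R)"] True by simp
      also have "\<dots> = -1" using \<open>R \<noteq> 0\<close> by (simp add: field_simps)
      finally show False by simp
    qed
    then show ?thesis using True by simp
  next
    case False
    then have ap: "0 < a" using a0 by simp
    have "0 \<le> b + 2 * (- R / a) * R + (- R / a)^2 * a" using q .
    also have "\<dots> = b - R^2 / a" using ap by (simp add: field_simps power2_eq_square)
    finally show ?thesis using ap by (simp add: field_simps mult.commute)
  qed
  then have "\<bar>R\<bar> \<le> sqrt (a * b)" using real_le_rsqrt[of "\<bar>R\<bar>" "a * b"] by simp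
  then show ?thesis unfolding a_def b_def R_def by (simp add: real_sqrt_mult)
qed

lemma n2_triangle: assumes zA: "z \<in> A" and wA: "w \<in> A"
  shows "sqrt (n2sq t (z + w)) \<le> sqrt (n2sq t z) + sqrt (n2sq t w)"
proof -
  have "n2sq t (z + w) = n2sq t z + 2 * Re (t (cadj w ** z)) + n2sq t w"
    using n2sq_comb[OF zA wA, of 1] by simp
  also have "\<dots> \<le> n2sq t z + 2 * (sqrt (n2sq t w) * sqrt (n2sq t z)) + n2sq t w"
    using cs[OF zA wA] by simp
  also have "\<dots> = (sqrt (n2sq t z) + sqrt (n2sq t w))^2"
    using n2sq_nonneg[OF zA] n2sq_nonneg[OF wA] by (simp add: power2_eq_square algebra_simps)
  finally show ?thesis
    by (metis real_le_lsqrt real_sqrt_ge_zero add_nonneg_nonneg n2sq_nonneg zA wA vna_add[OF vA] sqrt_le_D)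
qed

lemma n2sq_contr: assumes XA: "X \<in> A" and wA: "w \<in> A" and pX: "psd (mat 1 - cadj X ** X)"
  shows "n2sq t (X ** w) \<le> n2sq t w"
proof -
  have "psd (cadj w ** (mat 1 - cadj X ** X) ** w)" by (rule psd_sandwich[OF pX])
  moreover have "cadj w ** (mat 1 - cadj X ** X) ** w = cadj w ** w - cadj (X ** w) ** (X ** w)"
    by (simp add: cadj_mult matrix_diff_ldistrib matrix_diff_rdistrib matrix_mul_assoc)
  moreover have "cadj w ** w \<in> A" "cadj (X ** w) ** (X ** w) \<in> A"
    using XA wA vA by (auto intro!: vna_mult vna_adj)
  ultimately show ?thesis unfolding n2sq_def using tr_mono by metis
qed

end


lemma opn_le: "norm (M *v v) \<le> opnorm M * norm (v::complex^'n)"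
  unfolding opnorm_def by (rule onorm) simp

lemma opn_bound: "(\<And>v. norm (M *v v) \<le> b * norm (v::complex^'n)) \<Longrightarrow> opnorm M \<le> b"
  unfolding opnorm_def by (rule onorm_le)

lemma opn_nonneg: "0 \<le> opnorm (M::complex^'n^'n)"
  unfolding opnorm_def by (rule onorm_pos_le) simp

lemma opn_scaleR: "opnorm (c *\<^sub>R M) = \<bar>c\<bar> * opnorm (M::complex^'n^'n)"
  unfolding opnorm_def scaleR_mat_vec by (rule onorm_scaleR) simp

lemma opn_zero: "opnorm (0::complex^'n^'n) = 0"
proof -
  have e: "((*v) (0::complex^'n^'n)) = (\<lambda>v. 0)" by (rule ext) simp
  show ?thesis by (simp only: opnorm_def e onorm_zero)
qed

lemma psd_const_minus_adj:
  fixes a :: "complex^'n^'n"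
  assumes k0: "0 \<le> k" and bd: "\<And>u. norm (a *v u) \<le> k * norm u"
  shows "psd (mat (complex_of_real (k^2)) - a ** cadj a)"
  unfolding psd_iff_herm
proof (intro conjI allI)
  show "cadj (mat (complex_of_real (k^2)) - a ** cadj a) = mat (complex_of_real (k^2)) - a ** cadj a"
    by (simp add: cadj_diff cadj_mult)
  fix v
  have e: "inner v ((a ** cadj a) *v v) = (norm (cadj a *v v))^2"
    by (metis cadj_cadj inner_adj inner_self_norm matrix_vector_mul_assoc)
  have "(norm (cadj a *v v))^2 = inner v (a *v (cadj a *v v))"
    using e by (simp add: matrix_vector_mul_assoc)
  also have "\<dots> \<le> norm v * norm (a *v (cadj a *v v))" by (rule norm_cauchy_schwarz)
  also have "\<dots> \<le> norm v * (k * norm (cadj a *v v))" using bd by (simp add: mult_left_mono)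
  finally have "norm (cadj a *v v) * norm (cadj a *v v) \<le> (k * norm v) * norm (cadj a *v v)"
    by (simp add: power2_eq_square mult_ac)
  then have "norm (cadj a *v v) \<le> k * norm v"
    using norm_ge_zero[of "cadj a *v v"] k0 by (auto simp: mult_le_cancel_right)
  then have "(norm (cadj a *v v))^2 \<le> (k * norm v)^2" by (simp add: power_mono)
  moreover have "mat (complex_of_real (k^2)) *v v = (k^2) *\<^sub>R v" by (rule mat_real_vec)
  ultimately show "0 \<le> inner v ((mat (complex_of_real (k^2)) - a ** cadj a) *v v)"
    using e by (simp add: matrix_vector_mult_diff_rdistrib inner_diff_right inner_self_norm power_mult_distrib del: of_real_power)
qed

lemma adj_mult_opn: "psd (mat (complex_of_real ((opnorm a)^2)) - a ** cadj (a::complex^'n^'n))"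
  by (rule psd_const_minus_adj[OF opn_nonneg opn_le])

lemma mat_real_mid: "(A::complex^'n^'n) ** mat (complex_of_real c) ** B = c *\<^sub>R (A ** (B::complex^'n^'n))"
  by (simp only: mat_comm mat_real_mult mat_mult_scaleR_left)

context
  fixes A :: "(complex^'n^'n) set" and t
  assumes vA: "is_vna A" and tA: "is_trace A t"
begin

lemma step3:
  assumes KA: "K \<in> A" and wA: "w \<in> A" and pK: "psd K" and pIK: "psd (mat 1 - K)"
  shows "n2sq t (K ** w) \<le> (opnorm w)^2 * Re (t K)"
proof -
  have hK: "cadj K = K" using pK psd_herm by blast
  let ?c = "(opnorm w)^2"
  have wsA: "cadj w \<in> A" using vna_adj[OF vA wA] .
  have "t (cadj (K ** w) ** (K ** w)) = t ((cadj w ** K) ** (K ** w))"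
    by (simp add: cadj_mult hK)
  also have "\<dots> = t ((K ** w) ** (cadj w ** K))"
    by (rule tr_cyc[OF vA tA]) (auto intro!: vna_mult[OF vA] KA wA wsA)
  finally have e1: "n2sq t (K ** w) = Re (t (K ** (w ** cadj w) ** K))"
    unfolding n2sq_def by (simp add: matrix_mul_assoc)
  have p1: "psd (cadj K ** (mat (complex_of_real ?c) - w ** cadj w) ** K)"
    by (rule psd_sandwich[OF adj_mult_opn])
  have e2: "cadj K ** (mat (complex_of_real ?c) - w ** cadj w) ** K = ?c *\<^sub>R (K ** K) - K ** (w ** cadj w) ** K"
    unfolding hK by (simp add: matrix_diff_ldistrib matrix_diff_rdistrib mat_real_mid del: of_real_power)
  have A1: "K ** (w ** cadj w) ** K \<in> A" "?c *\<^sub>R (K ** K) \<in> A" "K ** K \<in> A"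
    using vA KA wA wsA by (auto intro!: vna_mult vna_scaleR)
  have "Re (t (K ** (w ** cadj w) ** K)) \<le> Re (t (?c *\<^sub>R (K ** K)))"
    using tr_mono[OF vA tA A1(1) A1(2)] p1 e2 by simp
  also have "\<dots> = ?c * Re (t (K ** K))" using tr_scaleR[OF vA tA A1(3)] by simp
  also have "Re (t (K ** K)) \<le> Re (t K)"
    using tr_mono[OF vA tA A1(3) KA] psd_X_minus_sq[OF pK pIK] by simp
  hence "?c * Re (t (K ** K)) \<le> ?c * Re (t K)" by (simp add: mult_left_mono)
  finally show ?thesis using e1 by simp
qed

end


lemma norm_mv_le: "norm ((w::complex^'n^'n) *v v) \<le> (of_nat CARD('n) * of_nat CARD('n)) * norm w * norm v"
proof -
  have c: "norm ((w *v v) $ i) \<le> of_nat CARD('n) * (norm w * norm v)" for i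
  proof -
    have "norm ((w *v v) $ i) = norm (\<Sum>j\<in>UNIV. w $ i $ j * v $ j)"
      by (simp add: matrix_vector_mult_def)
    also have "\<dots> \<le> (\<Sum>j\<in>UNIV. norm (w $ i $ j * v $ j))" by (rule norm_sum)
    also have "\<dots> \<le> (\<Sum>j\<in>(UNIV::'n set). norm w * norm v)"
    proof (rule sum_mono)
      fix j
      have "norm (w $ i $ j) \<le> norm w" using Finite_Cartesian_Product.norm_nth_le[of "w $ i" j] Finite_Cartesian_Product.norm_nth_le[of w i] by linarith
      moreover have "norm (v $ j) \<le> norm v" by (rule Finite_Cartesian_Product.norm_nth_le)
      ultimately show "norm (w $ i $ j * v $ j) \<le> norm w * norm v"
        by (simp add: norm_mult mult_mono)
    qed
    also have "\<dots> = of_nat CARD('n) * (norm w * norm v)" by simp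
    finally show ?thesis .
  qed
  have "norm (w *v v) = L2_set (\<lambda>i. norm ((w *v v) $ i)) UNIV" by (simp add: norm_vec_def)
  also have "\<dots> \<le> (\<Sum>i\<in>UNIV. norm ((w *v v) $ i))" by (rule L2_set_le_sum) simp
  also have "\<dots> \<le> (\<Sum>i\<in>(UNIV::'n set). of_nat CARD('n) * (norm w * norm v))" by (rule sum_mono) (rule c)
  also have "\<dots> = (of_nat CARD('n) * of_nat CARD('n)) * norm w * norm v" by (simp add: mult_ac)
  finally show ?thesis .
qed

lemma opn_le_norm: "opnorm (w::complex^'n^'n) \<le> (of_nat CARD('n) * of_nat CARD('n)) * norm w"
proof (rule opn_bound)
  fix v show "norm (w *v v) \<le> (of_nat CARD('n) * of_nat CARD('n)) * norm w * norm v" by (rule norm_mv_le)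
qed

lemma cadj_mult_self_expand:
  "(\<lambda>w::complex^'n^'n. cadj w ** w) = (\<lambda>w. \<chi> i j. \<Sum>k\<in>UNIV. cnj (w $ k $ i) * w $ k $ j)"
  by (simp add: cadj_def matrix_matrix_mult_def)

lemma cont_adj_self: "continuous_on S (\<lambda>w::complex^'n^'n. cadj w ** w)"
  unfolding cadj_mult_self_expand
  by (intro continuous_intros)

context
  fixes A :: "(complex^'n^'n) set" and t
  assumes vA: "is_vna A" and tA: "is_trace A t"
begin

lemma subA: "subspace A"
  unfolding subspace_def
proof (intro conjI ballI allI)
  show "0 \<in> A" by (rule vna_zero[OF vA])
  fix x y assume "x \<in> A" "y \<in> A" then show "x + y \<in> A" by (rule vna_add[OF vA])
next
  fix c x assume "x \<in> A" then show "c *\<^sub>R x \<in> A" by (rule vna_scaleR[OF vA])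
qed

lemma n2sq_scale: assumes wA: "w \<in> A" shows "n2sq t (c *\<^sub>R w) = c^2 * n2sq t w"
proof -
  have e: "n2sq t (0 + c *\<^sub>R w) = n2sq t 0 + 2 * c * Re (t (cadj w ** 0)) + c^2 * n2sq t w"
    by (rule n2sq_comb[OF vA tA vna_zero[OF vA] wA])
  have z: "n2sq t 0 = 0" "t (cadj w ** 0) = 0" using tr_zero[OF vA tA] by (auto simp: n2sq_def)
  show ?thesis using e z by simp
qed

lemma n2_lower: "\<exists>C>0. \<forall>w\<in>A. (opnorm w)^2 \<le> C * n2sq t w"
proof -
  obtain B where B: "B \<subseteq> A" "independent B" "A \<subseteq> span B" "card B = dim A" by (rule basis_exists)
  obtain g where g: "linear g" "\<forall>x\<in>B. g x = Re (t x)"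
    using linear_independent_extend[OF B(2), of "\<lambda>x. Re (t x)"] by fastforce
  define S where "S = {x \<in> A. g x = Re (t x)}"
  have "subspace S" unfolding subspace_def S_def
  proof (intro conjI ballI allI)
    show "0 \<in> {x \<in> A. g x = Re (t x)}" using vna_zero[OF vA] tr_zero[OF vA tA] linear_0[OF g(1)] by simp
    fix x y assume "x \<in> {x \<in> A. g x = Re (t x)}" "y \<in> {x \<in> A. g x = Re (t x)}"
    then show "x + y \<in> {x \<in> A. g x = Re (t x)}"
      using vna_add[OF vA] tr_add[OF vA tA] linear_add[OF g(1)] by simp
  next
    fix c x assume "x \<in> {x \<in> A. g x = Re (t x)}"
    then show "c *\<^sub>R x \<in> {x \<in> A. g x = Re (t x)}"
      using vna_scaleR[OF vA] tr_scaleR[OF vA tA] linear_scale[OF g(1)] by simp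
  qed
  moreover have "B \<subseteq> S" unfolding S_def using B(1) g(2) by auto
  ultimately have "span B \<subseteq> S" by (rule span_minimal[rotated])
  then have gA: "\<forall>x\<in>A. g x = Re (t x)" using B(3) unfolding S_def by blast
  define f where "f w = g (cadj w ** w)" for w :: "complex^'n^'n"
  have fA: "f w = n2sq t w" if "w \<in> A" for w
    unfolding f_def n2sq_def using gA vna_mult[OF vA vna_adj[OF vA that] that] by blast
  define K where "K = A \<inter> sphere 0 1"
  have "compact K" unfolding K_def
    by (intro closed_Int_compact closed_subspace subA compact_sphere)
  have I0: "mat 1 \<noteq> (0::complex^'n^'n)"
  proof
    assume "mat 1 = (0::complex^'n^'n)"
    then have "(mat 1 :: complex^'n^'n) $ undefined $ undefined = 0" by simp
    then show False by (simp add: mat_def)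
  qed
  have "mat 1 /\<^sub>R norm (mat 1 :: complex^'n^'n) \<in> K" unfolding K_def
    using vna_scaleR[OF vA vna_mat[OF vA]] I0 by auto
  then have Kne: "K \<noteq> {}" by blast
  have cont: "continuous_on K f" unfolding f_def
    using linear_continuous_on[OF linear_conv_bounded_linear[THEN iffD1, OF g(1)]] cont_adj_self
    by (rule continuous_on_compose2) auto
  obtain w0 where w0: "w0 \<in> K" "\<forall>y\<in>K. f w0 \<le> f y"
    using continuous_attains_inf[OF \<open>compact K\<close> Kne cont] by blast
  define m where "m = f w0"
  have w0A: "w0 \<in> A" and w0n: "norm w0 = 1" using w0(1) unfolding K_def by auto
  have "w0 \<noteq> 0" using w0n by auto
  then have m0: "m > 0" unfolding m_def fA[OF w0A]
    using n2sq_nonneg[OF vA tA w0A] n2sq_zero[OF vA tA w0A] by fastforce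
  define C0 where "C0 = real (CARD('n)) * real (CARD('n))"
  have C0: "C0 > 0" unfolding C0_def by simp
  define C where "C = C0^2 / m"
  have Cpos: "C > 0" unfolding C_def using C0 m0 by simp
  moreover have "(opnorm w)^2 \<le> C * n2sq t w" if wA: "w \<in> A" for w
  proof (cases "w = 0")
    case True then show ?thesis using n2sq_nonneg[OF vA tA wA] Cpos by (simp add: opn_zero)
  next
    case False
    then have nw: "norm w > 0" by simp
    have "w /\<^sub>R norm w \<in> K" unfolding K_def using vna_scaleR[OF vA wA] False by auto
    then have "m \<le> f (w /\<^sub>R norm w)" using w0(2) m_def by blast
    also have "\<dots> = (inverse (norm w))^2 * n2sq t w"
      using fA[OF vna_scaleR[OF vA wA]] n2sq_scale[OF wA, of "inverse (norm w)"] by simp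
    finally have "m * (norm w)^2 \<le> n2sq t w" using nw by (simp add: field_simps power2_eq_square)
    then have nw2: "(norm w)^2 \<le> n2sq t w / m" using m0 by (simp add: field_simps)
    have "(opnorm w)^2 \<le> (C0 * norm w)^2"
      using opn_le_norm[of w] opn_nonneg[of w] unfolding C0_def by (simp add: power_mono)
    also have "\<dots> = C0^2 * (norm w)^2" by (simp add: power_mult_distrib)
    also have "\<dots> \<le> C0^2 * (n2sq t w / m)" using mult_left_mono[OF nw2, of "C0^2"] by simp
    also have "\<dots> = C * n2sq t w" unfolding C_def by simp
    finally show ?thesis .
  qed
  ultimately show ?thesis by blast
qed

end


lemma absm_unique:
  fixes x :: "complex^'n^'n"
  assumes "psd h" "h ** h = cadj x ** x"
  shows "absm x = h"
proof -
  let ?M = "cadj x ** x"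
  obtain s where s: "psd s" "s ** s = ?M" "acts ?M s sqrt"
    using psd_sqrt[OF vna_UNIV _ psd_adj_mult] by blast
  show ?thesis unfolding absm_def
  proof (rule the1_equality)
    show "\<exists>!h. psd h \<and> h ** h = ?M" using s psd_sqrt_unique by blast
    show "psd h \<and> h ** h = ?M" using assms by blast
  qed
qed

lemma absm_scale:
  fixes z :: "complex^'n^'n"
  assumes c: "0 \<le> c"
  shows "absm (c *\<^sub>R z) = c *\<^sub>R absm z"
proof -
  obtain s where s: "psd (absm z)" "absm z ** absm z = cadj z ** z"
    using absm_props[OF vna_UNIV UNIV_I] by blast
  show ?thesis
  proof (rule absm_unique)
    show "psd (c *\<^sub>R absm z)" using psd_scaleR[OF s(1) c] .
    show "c *\<^sub>R absm z ** c *\<^sub>R absm z = cadj (c *\<^sub>R z) ** c *\<^sub>R z"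
      using s(2) by (simp add: cadj_scaleR mat_mult_scaleR_left mat_mult_scaleR_right)
  qed
qed

lemma psd_cX_minus_sq:
  fixes X :: "complex^'n^'n"
  assumes pX: "psd X" and pIX: "psd (mat (complex_of_real c) - X)"
  shows "psd (c *\<^sub>R X - X ** X)"
proof -
  have hX: "cadj X = X" using pX psd_herm by blast
  obtain s where s: "psd s" "s ** s = X" "acts X s sqrt"
    using psd_sqrt[OF vna_UNIV _ pX] by blast
  have hs: "cadj s = s" using s psd_herm by blast
  have "cadj s ** (mat (complex_of_real c) - X) ** s = c *\<^sub>R X - X ** X"
    unfolding hs
    by (rule acts_eq[OF hX acts_mult[OF acts_mult[OF s(3) acts_diff[OF acts_const acts_self]] s(3)]
          acts_diff[OF acts_scale[OF acts_self] acts_mult[OF acts_self acts_self]]])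
       (auto dest: psd_eig_nonneg[OF pX] simp: algebra_simps)
  then show ?thesis using psd_sandwich[OF pIX, of s] by simp
qed

lemma psd_opn_minus:
  fixes X :: "complex^'n^'n"
  assumes "psd X"
  shows "psd (mat (complex_of_real (opnorm X)) - X)"
  unfolding psd_iff_herm
proof (intro conjI allI)
  show "cadj (mat (complex_of_real (opnorm X)) - X) = mat (complex_of_real (opnorm X)) - X"
    using psd_herm[OF assms] by (simp add: cadj_diff)
  fix v
  have "inner v (X *v v) \<le> norm v * norm (X *v v)" by (rule norm_cauchy_schwarz)
  also have "\<dots> \<le> norm v * (opnorm X * norm v)" using opn_le[of X v] by (simp add: mult_left_mono)
  finally show "0 \<le> inner v ((mat (complex_of_real (opnorm X)) - X) *v v)"
    by (simp add: matrix_vector_mult_diff_rdistrib inner_diff_right mat_real_vec inner_self_norm power2_eq_square mult_ac)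
qed

lemma inf_prod:
  fixes S1 S2 :: "real set"
  assumes ne: "S1 \<noteq> {}" "S2 \<noteq> {}" and nn: "\<forall>a\<in>S1. 0 \<le> a" "\<forall>b\<in>S2. 0 \<le> b"
    and pr: "\<forall>a\<in>S1. \<forall>b\<in>S2. c \<le> a * b" and c0: "0 \<le> c"
  shows "c \<le> Inf S1 * Inf S2"
proof -
  have i1: "0 \<le> Inf S1" using ne nn by (intro cInf_greatest) auto
  have i2: "0 \<le> Inf S2" using ne nn by (intro cInf_greatest) auto
  show ?thesis
  proof (cases "c = 0")
    case True then show ?thesis using i1 i2 by simp
  next
    case False
    then have cp: "c > 0" using c0 by simp
    have bpos: "b > 0" if "b \<in> S2" for b
    proof -
      obtain a where "a \<in> S1" using ne by blast
      then have "c \<le> a * b" using pr that by blast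
      then show ?thesis using cp nn \<open>a \<in> S1\<close> that
        by (metis less_eq_real_def mult_zero_right not_le)
    qed
    have lb1: "c / b \<le> Inf S1" if "b \<in> S2" for b
    proof (rule cInf_greatest[OF ne(1)])
      fix a assume "a \<in> S1"
      then show "c / b \<le> a" using pr that bpos[OF that] by (simp add: divide_le_eq)
    qed
    obtain b0 where "b0 \<in> S2" using ne by blast
    have I1p: "Inf S1 > 0" using lb1[OF \<open>b0 \<in> S2\<close>] cp bpos[OF \<open>b0 \<in> S2\<close>]
      by (smt (verit) divide_pos_pos)
    have "c / Inf S1 \<le> Inf S2"
    proof (rule cInf_greatest[OF ne(2)])
      fix b assume "b \<in> S2"
      then have "c / b \<le> Inf S1" by (rule lb1)
      then show "c / Inf S1 \<le> b" using bpos[OF \<open>b \<in> S2\<close>] I1p cp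
        by (simp add: divide_le_eq field_simps)
    qed
    then show ?thesis using I1p by (simp add: divide_le_eq mult.commute)
  qed
qed

context
  fixes A :: "(complex^'n^'n) set" and d
  assumes vA: "is_vna A" and dA: "is_trace A d"
begin

lemma absmA: "z \<in> A \<Longrightarrow> absm z \<in> A" using absm_props[OF vA] by blast
lemma absm_psd: "z \<in> A \<Longrightarrow> psd (absm z)" using absm_props[OF vA] by blast
lemma absm_sq: "z \<in> A \<Longrightarrow> absm z ** absm z = cadj z ** z" using absm_props[OF vA] by blast

lemma norm1_nonneg: "z \<in> A \<Longrightarrow> 0 \<le> norm1 d z"
  unfolding norm1_def using tr_pos[OF vA dA absmA absm_psd] by blast

lemma norm1_pos: assumes zA: "z \<in> A" and z0: "z \<noteq> 0" shows "0 < norm1 d z"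
proof (rule ccontr)
  assume "\<not> 0 < norm1 d z"
  then have "Re (d (absm z)) = 0" using norm1_nonneg[OF zA] unfolding norm1_def by simp
  moreover have "d (absm z) \<in> \<real>" using tr_pos[OF vA dA absmA[OF zA] absm_psd[OF zA]] by blast
  ultimately have "d (absm z) = 0" by (simp add: complex_is_Real_iff complex_eq_iff)
  then have "absm z = 0" using tr_faithful[OF vA dA absmA[OF zA] absm_psd[OF zA]] by blast
  then have "cadj z ** z = 0" using absm_sq[OF zA] by simp
  then have "cadj z = 0" using adj_zero_imp[of "cadj z"] by simp
  then show False using z0 by (metis cadj_cadj cadj_zero)
qed

lemma norm1_scale: assumes "z \<in> A" "0 \<le> c" shows "norm1 d (c *\<^sub>R z) = c * norm1 d z"
proof -
  have "absm (c *\<^sub>R z) = c *\<^sub>R absm z" by (rule absm_scale[OF assms(2)])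
  moreover have "d (c *\<^sub>R absm z) = complex_of_real c * d (absm z)" by (rule tr_scaleR[OF vA dA absmA[OF assms(1)]])
  ultimately show ?thesis unfolding norm1_def by simp
qed

lemma n2sq_le_norm1: assumes zA: "z \<in> A"
  shows "n2sq d z \<le> opnorm (absm z) * norm1 d z"
proof -
  let ?X = "absm z"
  have XA: "?X \<in> A" and pX: "psd ?X" using absmA[OF zA] absm_psd[OF zA] by auto
  have p: "psd (opnorm ?X *\<^sub>R ?X - ?X ** ?X)" by (rule psd_cX_minus_sq[OF pX psd_opn_minus[OF pX]])
  have "Re (d (?X ** ?X)) \<le> Re (d (opnorm ?X *\<^sub>R ?X))"
    by (rule tr_mono[OF vA dA]) (auto intro!: vna_mult[OF vA] vna_scaleR[OF vA] XA p)
  then show ?thesis unfolding n2sq_def norm1_def using absm_sq[OF zA] tr_scaleR[OF vA dA XA] by simp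
qed

lemma n2sq_absm: "z \<in> A \<Longrightarrow> n2sq d (absm z) = n2sq d z"
  unfolding n2sq_def using absm_sq absm_psd psd_herm by metis

end


lemma qsqrt_val: "0 \<le> (\<mu>::real) \<Longrightarrow> (if \<mu> = 0 then 0 else 1 / sqrt \<mu>) * \<mu> = sqrt \<mu>"
  by (cases "\<mu> = 0") (auto simp: real_div_sqrt)

lemma qsqrt_val2: "0 \<le> (\<mu>::real) \<Longrightarrow> (if \<mu> = 0 then 0 else 1 / sqrt \<mu>) * \<mu> * (if \<mu> = 0 then 0 else 1 / sqrt \<mu>) = (if \<mu> = 0 then 0 else 1)"
  by (cases "\<mu> = 0") (auto simp: real_div_sqrt)

lemma ww_val: assumes "0 \<le> (\<mu>::real)"
  shows "(1 - (if \<mu> = 0 then 0 else 1 / sqrt \<mu>) * \<mu> * (if \<mu> = 0 then 0 else 1 / sqrt \<mu>)) *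
         (1 - (if \<mu> = 0 then 0 else 1 / sqrt \<mu>) * \<mu> * (if \<mu> = 0 then 0 else 1 / sqrt \<mu>)) =
         1 - (if \<mu> = 0 then 0 else 1 / sqrt \<mu>) * \<mu> * (if \<mu> = 0 then 0 else 1 / sqrt \<mu>)"
  unfolding qsqrt_val2[OF assms] by simp

context
  fixes A :: "(complex^'n^'n) set" and d
  assumes vA: "is_vna A" and dA: "is_trace A d"
begin

lemma polar_bound:
  assumes HA: "H \<in> A" and pH: "psd H" and pIH: "psd (mat 1 - H)" and xA: "x \<in> A"
  shows "norm1 d (H ** x) \<le> sqrt (Re (d (H ** rproj x))) * sqrt (n2sq d x)"
proof -
  define z where "z = H ** x"
  have zA: "z \<in> A" unfolding z_def using vna_mult[OF vA HA xA] .
  define P where "P = rproj x"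
  have PA: "P \<in> A" and PP: "P ** P = P" and hP: "cadj P = P" and Px: "P ** x = x"
    using rproj_props[OF vA xA] unfolding P_def by auto
  have hH: "cadj H = H" using pH psd_herm by blast
  define M where "M = cadj z ** z"
  have MA: "M \<in> A" unfolding M_def using vna_mult[OF vA vna_adj[OF vA zA] zA] .
  have pM: "psd M" unfolding M_def by (rule psd_adj_mult)
  have hM: "cadj M = M" using pM psd_herm by blast
  have ev0: "\<And>\<mu> e. M *v e = \<mu> *\<^sub>R e \<Longrightarrow> e \<noteq> 0 \<Longrightarrow> 0 \<le> \<mu>" using psd_eig_nonneg[OF pM] by blast
  define X where "X = absm z"
  have Xacts: "acts M X sqrt" unfolding X_def M_def using absm_props[OF vA zA] by blast
  let ?qf = "\<lambda>\<mu>::real. if \<mu> = 0 then 0 else 1 / sqrt \<mu>"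
  obtain q where qA: "q \<in> A" and hq: "cadj q = q" and qacts: "acts M q ?qf"
    using Ach_exists[OF vA MA hM] by blast
  have qM: "q ** M = X"
    by (rule acts_eq[OF hM acts_mult[OF qacts acts_self] Xacts])
       (rule qsqrt_val, rule ev0, assumption+)
  define a where "a = z ** q"
  have aA: "a \<in> A" unfolding a_def using vna_mult[OF vA zA qA] .
  have Xa: "X = cadj a ** z" unfolding a_def qM[symmetric] M_def
    by (simp add: cadj_mult hq matrix_mul_assoc)
  define b where "b = P ** H ** a"
  have bA: "b \<in> A" unfolding b_def using vA PA HA aA by (auto intro!: vna_mult)
  have "cadj b ** x = cadj a ** H ** (P ** x)"
    unfolding b_def by (simp add: cadj_mult hP hH matrix_mul_assoc)
  then have bx: "cadj b ** x = X" unfolding Px Xa z_def by (simp add: matrix_mul_assoc)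
  have n1: "norm1 d (H ** x) = Re (d (cadj b ** x))" unfolding bx X_def z_def norm1_def ..
  have csb: "Re (d (cadj b ** x)) \<le> sqrt (n2sq d b) * sqrt (n2sq d x)" by (rule cs[OF vA dA xA bA])
  define W where "W = mat 1 - q ** M ** q"
  have Wacts: "acts M W (\<lambda>\<mu>. 1 - ?qf \<mu> * \<mu> * ?qf \<mu>)"
    unfolding W_def by (rule acts_diff[OF acts_id acts_mult[OF acts_mult[OF qacts acts_self] qacts]])
  have WW: "W ** W = W"
    by (rule acts_eq[OF hM acts_mult[OF Wacts Wacts] Wacts])
       (rule ww_val, rule ev0, assumption+)
  have hW: "cadj W = W" unfolding W_def by (simp add: cadj_diff cadj_mult hq hM matrix_mul_assoc)
  have pW: "psd W" using psd_adj_mult[of W] hW WW by simp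
  have aa: "cadj a ** a = q ** M ** q" unfolding a_def M_def by (simp add: cadj_mult hq matrix_mul_assoc)
  have "psd (mat 1 - cadj a ** a)" using pW unfolding W_def aa .
  then have contr: "\<And>u. norm (a *v u) \<le> norm u" by (rule psd_norm_contr)
  have pIa: "psd (mat 1 - a ** cadj a)" by (rule contr_psd_adj[OF contr])
  define Y where "Y = P ** H"
  have YA: "Y \<in> A" unfolding Y_def using vna_mult[OF vA PA HA] .
  have hY: "cadj Y = H ** P" unfolding Y_def by (simp add: cadj_mult hP hH)
  have YsA: "cadj Y \<in> A" using vna_adj[OF vA YA] .
  have "d (cadj b ** b) = d ((cadj a ** cadj Y) ** (Y ** a))"
    unfolding b_def Y_def by (simp add: cadj_mult matrix_mul_assoc)
  also have "\<dots> = d ((Y ** a) ** (cadj a ** cadj Y))"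
    by (rule tr_cyc[OF vA dA]) (auto intro!: vna_mult[OF vA] vna_adj[OF vA] aA YA)
  finally have e1: "d (cadj b ** b) = d (Y ** (a ** cadj a) ** cadj Y)" by (simp add: matrix_mul_assoc)
  have A2: "Y ** (a ** cadj a) ** cadj Y \<in> A" "Y ** cadj Y \<in> A"
    using vA YA aA YsA by (auto intro!: vna_mult vna_adj)
  have "psd (cadj (cadj Y) ** (mat 1 - a ** cadj a) ** cadj Y)" by (rule psd_sandwich[OF pIa])
  moreover have "cadj (cadj Y) ** (mat 1 - a ** cadj a) ** cadj Y = Y ** cadj Y - Y ** (a ** cadj a) ** cadj Y"
    by (simp add: matrix_diff_ldistrib matrix_diff_rdistrib)
  ultimately have s1: "Re (d (Y ** (a ** cadj a) ** cadj Y)) \<le> Re (d (Y ** cadj Y))"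
    using tr_mono[OF vA dA A2] by simp
  have A3: "P ** H ** H ** P \<in> A" "P ** H ** P \<in> A" using vA PA HA by (auto intro!: vna_mult)
  have "psd (cadj P ** (H - H ** H) ** P)" by (rule psd_sandwich[OF psd_X_minus_sq[OF pH pIH]])
  moreover have "cadj P ** (H - H ** H) ** P = P ** H ** P - P ** H ** H ** P"
    unfolding hP by (simp add: matrix_diff_ldistrib matrix_diff_rdistrib matrix_mul_assoc)
  ultimately have s2: "Re (d (P ** H ** H ** P)) \<le> Re (d (P ** H ** P))"
    using tr_mono[OF vA dA A3] by simp
  have "d (P ** H ** P) = d (P ** (P ** H))"
    by (rule tr_cyc[OF vA dA]) (auto intro!: vna_mult[OF vA] PA HA)
  also have "\<dots> = d (P ** H)" using PP by (simp add: matrix_mul_assoc)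
  also have "\<dots> = d (H ** P)" by (rule tr_cyc[OF vA dA PA HA])
  finally have e3: "d (P ** H ** P) = d (H ** P)" .
  have YY: "Y ** cadj Y = P ** H ** H ** P" unfolding hY unfolding Y_def by (simp add: matrix_mul_assoc)
  have nb: "n2sq d b \<le> Re (d (H ** P))"
    unfolding n2sq_def e1 using s1 s2 e3 YY by simp
  have "sqrt (n2sq d b) * sqrt (n2sq d x) \<le> sqrt (Re (d (H ** P))) * sqrt (n2sq d x)"
    by (rule mult_right_mono) (use nb n2sq_nonneg[OF vA dA xA] in auto)
  then show ?thesis using n1 csb unfolding P_def by simp
qed

end


theorem theorem3p13:
  fixes A :: "(complex^'n^'n) set" and B :: "(complex^'m^'m) set"
    and d :: "complex^'n^'n \<Rightarrow> complex" and t :: "complex^'m^'m \<Rightarrow> complex"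
    and F :: "complex^'n^'n \<Rightarrow> complex^'m^'m" and Fs :: "complex^'m^'m \<Rightarrow> complex^'n^'n"
    and k eps eta :: real and x :: "complex^'n^'n"
  assumes "is_vna A" and "is_vna B" and "is_trace A d" and "is_trace B t"
    and "k > 0"
    and "is_map_adjoint A B d t F Fs"
    and "k_transform A B d t k F Fs"
    and "\<forall>y\<in>A. Fs (F y) = mat (complex_of_real k) ** y"
    and "x \<in> A" and "x \<noteq> 0"
    and "0 \<le> eps" and "eps \<le> 1" and "0 \<le> eta" and "eta \<le> 1" and "eps + eta \<le> 1"
  shows "smooth_supp2 A d eps x * smooth_supp2 B t eta (F x) \<ge> k * (1 - eps - eta)^2"
proof -
  note vA = assms(1) and vB = assms(2) and dA = assms(3) and tB = assms(4) and k0 = assms(5)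
  note xA = assms(9) and x0 = assms(10)
  have FB: "\<And>z. z \<in> A \<Longrightarrow> F z \<in> B" using assms(7) unfolding k_transform_def by blast
  have Fadd: "\<And>z w. z \<in> A \<Longrightarrow> w \<in> A \<Longrightarrow> F (z + w) = F z + F w"
    using assms(7) unfolding k_transform_def clinear_map_def by blast
  have Fsm: "\<And>c z. z \<in> A \<Longrightarrow> F (mat c ** z) = mat c ** F z"
    using assms(7) unfolding k_transform_def clinear_map_def by blast
  have Fsup: "Sup {opnorm (F z) | z. z \<in> A \<and> norm1 d z = 1} \<le> 1"
    using assms(7) unfolding k_transform_def by blast
  have adj: "\<And>z y. z \<in> A \<Longrightarrow> y \<in> B \<Longrightarrow> t (F z ** cadj y) = d (z ** cadj (Fs y))"
    using assms(6) unfolding is_map_adjoint_def by blast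
  have FsF: "\<And>z. z \<in> A \<Longrightarrow> Fs (F z) = mat (complex_of_real k) ** z" using assms(8) by blast
  have Fscale: "\<And>c z. z \<in> A \<Longrightarrow> F (c *\<^sub>R z) = c *\<^sub>R F z"
    using Fsm by (metis mat_real_mult)
  have Fdiff: "\<And>z w. z \<in> A \<Longrightarrow> w \<in> A \<Longrightarrow> F (z - w) = F z - F w"
  proof -
    fix z w assume "z \<in> A" "w \<in> A"
    then have "F ((z - w) + w) = F (z - w) + F w" using Fadd vna_diff[OF vA] by blast
    then show "F (z - w) = F z - F w" by (simp add: algebra_simps)
  qed
  have F0: "F 0 = 0" using Fscale[OF vna_zero[OF vA], of 0] by simp
  have n2F: "n2sq t (F z) = k * n2sq d z" if zA: "z \<in> A" for z
  proof -
    have "t (cadj (F z) ** F z) = t (F z ** cadj (F z))"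
      by (rule tr_cyc[OF vB tB]) (auto intro!: vna_adj[OF vB] FB zA)
    also have "\<dots> = d (z ** cadj (Fs (F z)))" by (rule adj[OF zA FB[OF zA]])
    also have "\<dots> = d (mat (complex_of_real k) ** (z ** cadj z))"
      unfolding FsF[OF zA] by (simp add: cadj_smult mat_scal_assoc2)
    also have "\<dots> = complex_of_real k * d (z ** cadj z)"
      by (rule tr_smult[OF vA dA]) (auto intro!: vna_mult[OF vA] vna_adj[OF vA] zA)
    also have "d (z ** cadj z) = d (cadj z ** z)"
      by (rule tr_cyc[OF vA dA]) (auto intro!: vna_adj[OF vA] zA)
    finally show ?thesis unfolding n2sq_def by simp
  qed
  obtain CA where CA: "CA > 0" "\<forall>w\<in>A. (opnorm w)^2 \<le> CA * n2sq d w" using n2_lower[OF vA dA] by blast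
  obtain CB where CB: "CB > 0" "\<forall>w\<in>B. (opnorm w)^2 \<le> CB * n2sq t w" using n2_lower[OF vB tB] by blast
  have bdd: "bdd_above {opnorm (F z) | z. z \<in> A \<and> norm1 d z = 1}"
  proof (rule bdd_aboveI)
    fix r assume "r \<in> {opnorm (F z) | z. z \<in> A \<and> norm1 d z = 1}"
    then obtain z where zA: "z \<in> A" and n1: "norm1 d z = 1" and r: "r = opnorm (F z)" by blast
    define N where "N = n2sq d z"
    have N0: "0 \<le> N" unfolding N_def using n2sq_nonneg[OF vA dA zA] .
    have "N \<le> opnorm (absm z)" using n2sq_le_norm1[OF vA dA zA] n1 unfolding N_def by simp
    moreover have "(opnorm (absm z))^2 \<le> CA * N"
      using CA(2) absmA[OF vA dA zA] n2sq_absm[OF vA dA zA] unfolding N_def by metis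
    ultimately have "N^2 \<le> CA * N" using N0 by (meson order_trans power_mono)
    then have NC: "N \<le> CA" using N0 CA(1)
      by (cases "N = 0") (auto simp: power2_eq_square mult_le_cancel_right)
    have "(opnorm (F z))^2 \<le> CB * n2sq t (F z)" using CB(2) FB[OF zA] by blast
    also have "\<dots> = CB * (k * N)" unfolding N_def n2F[OF zA] ..
    also have "\<dots> \<le> CB * (k * CA)" using NC CB(1) k0 by (simp add: mult_left_mono)
    finally have "opnorm (F z) \<le> sqrt (CB * (k * CA))" by (rule real_le_rsqrt)
    then show "r \<le> sqrt (CB * (k * CA))" using r by simp
  qed
  have opF: "opnorm (F z) \<le> norm1 d z" if zA: "z \<in> A" for z
  proof (cases "z = 0")
    case True
    then have "opnorm (F z) = 0" using F0 by (simp add: opn_zero)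
    then show ?thesis using norm1_nonneg[OF vA dA zA] by simp
  next
    case False
    define n where "n = norm1 d z"
    have n0: "0 < n" unfolding n_def using norm1_pos[OF vA dA zA False] .
    have z'A: "(1 / n) *\<^sub>R z \<in> A" using vna_scaleR[OF vA zA] .
    have "norm1 d ((1 / n) *\<^sub>R z) = 1" using norm1_scale[OF vA dA zA, of "1/n"] n0 unfolding n_def by simp
    then have "opnorm (F ((1 / n) *\<^sub>R z)) \<in> {opnorm (F z) | z. z \<in> A \<and> norm1 d z = 1}" using z'A by blast
    then have "opnorm (F ((1 / n) *\<^sub>R z)) \<le> 1" using cSup_upper[OF _ bdd] Fsup by (meson order_trans)
    then have "opnorm ((1 / n) *\<^sub>R F z) \<le> 1" using Fscale[OF zA] by simp
    then have "(1 / n) * opnorm (F z) \<le> 1" using n0 by (simp add: opn_scaleR)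
    then show ?thesis using n0 unfolding n_def[symmetric] by (simp add: field_simps)
  qed
  define y where "y = F x"
  have yB: "y \<in> B" unfolding y_def using FB[OF xA] .
  define P where "P = rproj x"
  define Q where "Q = rproj y"
  have QB: "Q \<in> B" and QQ: "Q ** Q = Q" and hQ: "cadj Q = Q" and Qy: "Q ** y = y"
    using rproj_props[OF vB yB] unfolding Q_def by auto
  define X where "X = sqrt (n2sq d x)"
  have Xpos: "X > 0" unfolding X_def using n2sq_nonneg[OF vA dA xA] n2sq_zero[OF vA dA xA] x0
    by (metis less_eq_real_def real_sqrt_gt_zero)
  have ny: "sqrt (n2sq t y) = sqrt k * X" unfolding y_def X_def n2F[OF xA] by (simp add: real_sqrt_mult)
  have main: "k * (1 - eps - eta)^2 \<le> Re (d (H ** P)) * Re (t (K ** Q))"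
    if HA: "H \<in> A" and pH: "psd H" and pIH: "psd (mat 1 - H)"
      and Hf: "norm2 d ((mat 1 - H) ** x) \<le> eps * norm2 d x"
      and KB: "K \<in> B" and pK: "psd K" and pIK: "psd (mat 1 - K)"
      and Kf: "norm2 t ((mat 1 - K) ** y) \<le> eta * norm2 t y" for H K
  proof -
    have IA: "mat 1 \<in> A" and IB: "mat 1 \<in> B" using vna_mat vA vB by auto
    have IHx: "(mat 1 - H) ** x \<in> A" using vA IA HA xA by (auto intro!: vna_mult vna_diff)
    have IKy: "(mat 1 - K) ** y \<in> B" using vB IB KB yB by (auto intro!: vna_mult vna_diff)
    have Hf': "sqrt (n2sq d ((mat 1 - H) ** x)) \<le> eps * X"
      using Hf norm2_eq[OF vA dA IHx] norm2_eq[OF vA dA xA] unfolding X_def by simp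
    have Kf': "sqrt (n2sq t ((mat 1 - K) ** y)) \<le> eta * (sqrt k * X)"
      using Kf norm2_eq[OF vB tB IKy] norm2_eq[OF vB tB yB] ny by simp
    define K1 where "K1 = Q ** K ** Q"
    have K1B: "K1 \<in> B" unfolding K1_def using vB QB KB by (auto intro!: vna_mult)
    have pK1: "psd K1" unfolding K1_def using psd_sandwich[OF pK, of Q] hQ by simp
    have pIQ: "psd (mat 1 - Q)"
    proof -
      have "cadj (mat 1 - Q) ** (mat 1 - Q) = mat 1 - Q"
        by (simp add: cadj_diff hQ matrix_diff_ldistrib matrix_diff_rdistrib QQ)
      then show ?thesis using psd_adj_mult[of "mat 1 - Q"] by simp
    qed
    have pIK1: "psd (mat 1 - K1)"
    proof -
      have "psd ((mat 1 - Q) + cadj Q ** (mat 1 - K) ** Q)"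
        by (rule psd_add[OF pIQ psd_sandwich[OF pIK]])
      moreover have "(mat 1 - Q) + cadj Q ** (mat 1 - K) ** Q = mat 1 - K1"
        unfolding K1_def hQ by (simp add: matrix_diff_ldistrib matrix_diff_rdistrib QQ)
      ultimately show ?thesis by simp
    qed
    have hK1: "cadj K1 = K1" using pK1 psd_herm by blast
    have pIK1sq: "psd (mat 1 - cadj K1 ** K1)"
      unfolding hK1 by (rule psd_diff_eq[OF pIK1 psd_X_minus_sq[OF pK1 pIK1]])
    have pIQsq: "psd (mat 1 - cadj Q ** Q)" unfolding hQ QQ by (rule pIQ)
    have e1: "(mat 1 - K1) ** y = Q ** ((mat 1 - K) ** y)"
      unfolding K1_def
      by (simp add: matrix_diff_ldistrib matrix_diff_rdistrib Qy matrix_mul_assoc[symmetric])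
    have b1: "sqrt (n2sq t ((mat 1 - K1) ** y)) \<le> eta * (sqrt k * X)"
      unfolding e1 using n2sq_contr[OF vB tB QB IKy pIQsq] Kf' by (meson order_trans real_sqrt_le_mono)
    have K1y: "K1 ** y \<in> B" using vna_mult[OF vB K1B yB] .
    have IK1y: "(mat 1 - K1) ** y \<in> B" using vB IB K1B yB by (auto intro!: vna_mult vna_diff)
    have "sqrt (n2sq t y) \<le> sqrt (n2sq t (K1 ** y)) + sqrt (n2sq t ((mat 1 - K1) ** y))"
      using n2_triangle[OF vB tB K1y IK1y] by (simp add: matrix_diff_rdistrib)
    then have b2: "sqrt k * X - eta * (sqrt k * X) \<le> sqrt (n2sq t (K1 ** y))" using ny b1 by simp
    have HxA: "H ** x \<in> A" using vna_mult[OF vA HA xA] .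
    have FHx: "F (H ** x) \<in> B" using FB[OF HxA] .
    have FIHx: "F ((mat 1 - H) ** x) \<in> B" using FB[OF IHx] .
    have split: "K1 ** y = K1 ** F (H ** x) + K1 ** F ((mat 1 - H) ** x)"
    proof -
      have "(mat 1 - H) ** x = x - H ** x" by (simp add: matrix_diff_rdistrib)
      then have "F ((mat 1 - H) ** x) = y - F (H ** x)" unfolding y_def using Fdiff[OF xA HxA] by simp
      then show ?thesis by (simp add: matrix_diff_ldistrib)
    qed
    have K1a: "K1 ** F (H ** x) \<in> B" "K1 ** F ((mat 1 - H) ** x) \<in> B"
      using vna_mult[OF vB K1B] FHx FIHx by auto
    have "sqrt (n2sq t (K1 ** y)) \<le> sqrt (n2sq t (K1 ** F (H ** x))) + sqrt (n2sq t (K1 ** F ((mat 1 - H) ** x)))"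
      unfolding split by (rule n2_triangle[OF vB tB K1a])
    moreover have "sqrt (n2sq t (K1 ** F ((mat 1 - H) ** x))) \<le> sqrt k * (eps * X)"
    proof -
      have "n2sq t (K1 ** F ((mat 1 - H) ** x)) \<le> n2sq t (F ((mat 1 - H) ** x))"
        by (rule n2sq_contr[OF vB tB K1B FIHx pIK1sq])
      also have "\<dots> = k * n2sq d ((mat 1 - H) ** x)" by (rule n2F[OF IHx])
      finally have "sqrt (n2sq t (K1 ** F ((mat 1 - H) ** x))) \<le> sqrt k * sqrt (n2sq d ((mat 1 - H) ** x))"
        by (metis real_sqrt_le_mono real_sqrt_mult)
      also have "\<dots> \<le> sqrt k * (eps * X)" using mult_left_mono[OF Hf', of "sqrt k"] k0 by simp
      finally show ?thesis .
    qed
    ultimately have lower: "sqrt k * X * (1 - eps - eta) \<le> sqrt (n2sq t (K1 ** F (H ** x)))"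
      using b2 by (simp add: algebra_simps)
    have "n2sq t (K1 ** F (H ** x)) \<le> (opnorm (F (H ** x)))^2 * Re (t K1)"
      by (rule step3[OF vB tB K1B FHx pK1 pIK1])
    moreover have "Re (t K1) = Re (t (K ** Q))"
    proof -
      have "t K1 = t (Q ** (Q ** K))" unfolding K1_def
        by (rule tr_cyc[OF vB tB]) (auto intro!: vna_mult[OF vB] QB KB)
      also have "\<dots> = t (Q ** K)" using QQ by (simp add: matrix_mul_assoc)
      also have "\<dots> = t (K ** Q)" by (rule tr_cyc[OF vB tB QB KB])
      finally show ?thesis by simp
    qed
    moreover have tKQ0: "0 \<le> Re (t (K ** Q))"
      using tr_pos[OF vB tB K1B pK1] \<open>Re (t K1) = Re (t (K ** Q))\<close> by simp
    moreover have "(opnorm (F (H ** x)))^2 \<le> Re (d (H ** P)) * X^2"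
    proof -
      have "opnorm (F (H ** x)) \<le> sqrt (Re (d (H ** P))) * X"
        using opF[OF HxA] polar_bound[OF vA dA HA pH pIH xA] unfolding P_def X_def by simp
      moreover have "0 \<le> opnorm (F (H ** x))" by (rule opn_nonneg)
      ultimately have "(opnorm (F (H ** x)))^2 \<le> (sqrt (Re (d (H ** P))) * X)^2" by (simp add: power_mono)
      also have "\<dots> = Re (d (H ** P)) * X^2"
      proof -
        have "0 \<le> Re (d (H ** P))"
        proof -
          have PA: "P \<in> A" and hP: "cadj P = P" and PP: "P ** P = P"
            using rproj_props[OF vA xA] unfolding P_def by auto
          have "d (P ** H ** P) = d (P ** (P ** H))"
            by (rule tr_cyc[OF vA dA]) (auto intro!: vna_mult[OF vA] PA HA)
          also have "\<dots> = d (H ** P)" using PP tr_cyc[OF vA dA PA HA] by (simp add: matrix_mul_assoc)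
          finally have "d (P ** H ** P) = d (H ** P)" .
          moreover have "psd (P ** H ** P)" using psd_sandwich[OF pH, of P] hP by simp
          ultimately show ?thesis using tr_pos[OF vA dA _ , of "P ** H ** P"] vA PA HA
            by (auto intro!: vna_mult)
        qed
        then show ?thesis by (simp add: power_mult_distrib)
      qed
      finally show ?thesis .
    qed
    ultimately have up: "n2sq t (K1 ** F (H ** x)) \<le> Re (d (H ** P)) * X^2 * Re (t (K ** Q))"
      by (smt (verit) mult_right_mono)
    have lo0: "0 \<le> sqrt k * X * (1 - eps - eta)" using Xpos k0 assms(15) by simp
    have "(sqrt k * X * (1 - eps - eta))^2 \<le> n2sq t (K1 ** F (H ** x))"
      using power_mono[OF lower lo0, of 2] real_sqrt_pow2[OF n2sq_nonneg[OF vB tB K1a(1)]] by simp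
    then have "k * (1 - eps - eta)^2 * X^2 \<le> (Re (d (H ** P)) * Re (t (K ** Q))) * X^2"
      using up k0 by (simp add: power_mult_distrib mult_ac)
    then show ?thesis using Xpos by simp
  qed
  define S1 where "S1 = {Re (d (H ** rproj x)) | H. H \<in> A \<and> psd H \<and> psd (mat 1 - H)
        \<and> norm2 d ((mat 1 - H) ** x) \<le> eps * norm2 d x}"
  define S2 where "S2 = {Re (t (H ** rproj (F x))) | H. H \<in> B \<and> psd H \<and> psd (mat 1 - H)
        \<and> norm2 t ((mat 1 - H) ** F x) \<le> eta * norm2 t (F x)}"
  have ss: "smooth_supp2 A d eps x = Inf S1" "smooth_supp2 B t eta (F x) = Inf S2"
    unfolding smooth_supp2_def S1_def S2_def by simp_all
  have pos: "0 \<le> Re (tt (H ** rproj z))"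
    if vM: "is_vna M" and tM: "is_trace M tt" and HM: "H \<in> M" and pH: "psd H" and zM: "z \<in> M" for M tt H z
  proof -
    have RM: "rproj z \<in> M" and hR: "cadj (rproj z) = rproj z" and RR: "rproj z ** rproj z = rproj z"
      using rproj_props[OF vM zM] by auto
    have "tt (rproj z ** H ** rproj z) = tt (rproj z ** (rproj z ** H))"
      by (rule tr_cyc[OF vM tM]) (auto intro!: vna_mult[OF vM] RM HM)
    also have "\<dots> = tt (H ** rproj z)" using RR tr_cyc[OF vM tM RM HM] by (simp add: matrix_mul_assoc)
    finally have "tt (rproj z ** H ** rproj z) = tt (H ** rproj z)" .
    moreover have "psd (rproj z ** H ** rproj z)" using psd_sandwich[OF pH, of "rproj z"] hR by simp
    moreover have "rproj z ** H ** rproj z \<in> M" using vM RM HM by (auto intro!: vna_mult)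
    ultimately show ?thesis using tr_pos[OF vM tM] by metis
  qed
  have I1: "Re (d (mat 1 ** rproj x)) \<in> S1"
  proof -
    have "norm2 d ((mat 1 - mat 1) ** x) = 0"
      using norm2_eq[OF vA dA vna_zero[OF vA]] tr_zero[OF vA dA] by (simp add: n2sq_def)
    moreover have "0 \<le> eps * norm2 d x"
      using assms(11) norm2_eq[OF vA dA xA] n2sq_nonneg[OF vA dA xA] by simp
    ultimately show ?thesis unfolding S1_def using vna_mat[OF vA] psd_id psd_zero by fastforce
  qed
  have I2: "Re (t (mat 1 ** rproj (F x))) \<in> S2"
  proof -
    have "norm2 t ((mat 1 - mat 1) ** F x) = 0"
      using norm2_eq[OF vB tB vna_zero[OF vB]] tr_zero[OF vB tB] by (simp add: n2sq_def)
    moreover have "0 \<le> eta * norm2 t (F x)"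
      using assms(13) norm2_eq[OF vB tB FB[OF xA]] n2sq_nonneg[OF vB tB FB[OF xA]] by simp
    ultimately show ?thesis unfolding S2_def using vna_mat[OF vB] psd_id psd_zero by fastforce
  qed
  have "k * (1 - eps - eta)^2 \<le> Inf S1 * Inf S2"
  proof (rule inf_prod)
    show "S1 \<noteq> {}" using I1 by blast
    show "S2 \<noteq> {}" using I2 by blast
    show "\<forall>a\<in>S1. 0 \<le> a" unfolding S1_def using pos[OF vA dA _ _ xA] by blast
    show "\<forall>b\<in>S2. 0 \<le> b" unfolding S2_def using pos[OF vB tB _ _ FB[OF xA]] by blast
    show "\<forall>a\<in>S1. \<forall>b\<in>S2. k * (1 - eps - eta)^2 \<le> a * b"
      unfolding S1_def S2_def using main unfolding P_def Q_def y_def by blast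
    show "0 \<le> k * (1 - eps - eta)^2" using k0 by simp
  qed
  then show ?thesis unfolding ss by simp
qed


end
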